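(* Let $\mathcal{T}$ be a transversely convex tube in standard position, with support map $\Gamma$, and suppose that for each $z\in(-1,1)$ the horizontal cross-section $\mathcal{O}(z)$ is central about $\mathbf{c}(z)$. Fix a tilt direction $\tau\in S^{1}$, and for each $z$ let $\mathbf{c}_{\varepsilon}(\theta,z)$ denote the centrix of the oval $\mathcal{O}(z,\varepsilon)$ as defined below. Then $$\frac{\partial\mathbf{c}_{\varepsilon}}{\partial\varepsilon}(\theta,z)\Big|_{\varepsilon=0} =(\tau\cdot i e^{i\theta})\Bigl(\frac{\partial\Gamma^{*}}{\partial z}\cdot e^{i\theta}\Bigr)\frac{\partial\Gamma^{*}}{\partial\theta} +(\tau\cdot\mathbf{c}(z))\,\mathbf{c}'(z)+(\tau\cdot\Gamma^{*})\frac{\partial\Gamma^{*}}{\partial z},$$ where $\Gamma^{*}$ and its derivatives are evaluated at $(\theta,z)$.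
   Context: Identify $\mathbb{R}^{2}\cong\mathbb{C}$, points of $\mathbb{R}^{3}$ as $(p,z)$. An oval is a $C^{2}$ embedded closed plane curve with nowhere-vanishing curvature. A map $\gamma:S^{1}\to\mathbb{R}^{2}$ support-parametrizes an oval if it parametrizes it and $\gamma'(\theta)=|\gamma'(\theta)|\,i e^{i\theta}$ (i.e. $\gamma$ inverts the outer unit normal). For an oval with support parametrization $\gamma$, its centrix is $\theta\mapsto\frac12(\gamma(\theta)+\gamma(\theta+\pi))$. A transversely convex tube in standard position is the image $\mathcal{T}$ of an embedding $(\theta,z)\mapsto(\mathbf{c}_{0}(z)+\gamma(z;\theta),z)$ on $S^{1}\times(-1,1)$ with $C^{2}$ data and each $\gamma(z;\cdot)$ an oval with centroid at the origin. Let $\mathcal{O}(z)\subset\mathbb{R}^{2}$ be the projection of $\mathcal{T}\cap\{z\text{-coordinate}=z\}$. The support map $\Gamma:S^{1}\times(-1,1)\to\mathbb{R}^{2}$ is defined by: $\Gamma(\cdot,z)$ support-parametrizes $\mathcal{O}(z)$. Under the hypothesis, $\Gamma^{*}(\theta,z)=\frac12(\Gamma(\theta,z)-\Gamma(\theta+\pi,z))$, so $\Gamma=\mathbf{c}+\Gamma^{*}$. For $\tau\in S^{1}$, $b\in(-1,1)$, $\varepsilon\in\mathbb{R}$, let $P_{\tau,b}(\varepsilon)=\{(p,z): z=\varepsilon\,(p\cdot\tau)+b\}$ and let $\mathcal{O}(b,\varepsilon)$ be the projection to $\mathbb{R}^{2}$ of $\mathcal{T}\cap P_{\tau,b}(\varepsilon)$,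 an oval for $|\varepsilon|$ small. Let $\zeta(\varepsilon,\theta)$ be the $C^{2}$ function near $\varepsilon=0$ with $\zeta(0,\theta)=b$ and $\zeta(\varepsilon,\theta)=b+\varepsilon\,\tau\cdot\Gamma(\theta,\zeta(\varepsilon,\theta))$, so $\theta\mapsto\Gamma(\theta,\zeta(\varepsilon,\theta))$ parametrizes $\mathcal{O}(b,\varepsilon)$; let $\theta_{\varepsilon}$ be the diffeomorphisms of $S^{1}$, differentiable in $\varepsilon$ with $\theta_{0}=\mathrm{id}$, such that $\theta\mapsto\Gamma(\theta_{\varepsilon}(\theta),\zeta(\varepsilon,\theta_{\varepsilon}(\theta)))$ support-parametrizes $\mathcal{O}(b,\varepsilon)$. Then the centrix of $\mathcal{O}(b,\varepsilon)$ is $\mathbf{c}_{\varepsilon}(\theta,b)=\frac12\bigl[\Gamma(\theta_{\varepsilon}(\theta),\zeta(\varepsilon,\theta_{\varepsilon}(\theta)))+\Gamma(\theta_{\varepsilon}(\theta+\pi),\zeta(\varepsilon,\theta_{\varepsilon}(\theta+\pi)))\bigr]$, and in the claim $b=z$. *)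

theory Defs
  imports "HOL-Analysis.Analysis"
begin

text \<open>R^2 is identified with the complex plane; points of R^3 are pairs (p, z).
  S^1 is parametrised by real angles; functions on S^1 are 2 pi-periodic functions on the reals.\<close>

definition C2_on :: "'a::real_normed_vector set \<Rightarrow> ('a \<Rightarrow> 'b::real_normed_vector) \<Rightarrow> bool" where
  "C2_on S f \<longleftrightarrow>
     (\<exists>(D :: 'a \<Rightarrow> ('a \<Rightarrow>\<^sub>L 'b)) (D2 :: 'a \<Rightarrow> ('a \<Rightarrow>\<^sub>L ('a \<Rightarrow>\<^sub>L 'b))).
        (\<forall>x\<in>S. (f has_derivative blinfun_apply (D x)) (at x)
               \<and> (D has_derivative blinfun_apply (D2 x)) (at x))
        \<and> continuous_on S D2)"

text \<open>A C^2 regular simple closed curve with nowhere-vanishing curvature, parametrised by S^1.\<close>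
definition oval_param :: "(real \<Rightarrow> complex) \<Rightarrow> bool" where
  "oval_param g \<longleftrightarrow>
     (\<forall>t. g (t + 2*pi) = g t) \<and> inj_on g {0..<2*pi} \<and> C2_on UNIV g \<and>
     (\<forall>t. vector_derivative g (at t) \<noteq> 0) \<and>
     (\<forall>t. Im (cnj (vector_derivative g (at t)) *
              vector_derivative (\<lambda>s. vector_derivative g (at s)) (at t)) \<noteq> 0)"

definition is_oval :: "complex set \<Rightarrow> bool" where
  "is_oval C \<longleftrightarrow> (\<exists>g. oval_param g \<and> g ` {0..<2*pi} = C)"

definition support_param :: "(real \<Rightarrow> complex) \<Rightarrow> complex set \<Rightarrow> bool" where
  "support_param g C \<longleftrightarrow>
     is_oval C \<and> (\<forall>t. g (t + 2*pi) = g t) \<and> inj_on g {0..<2*pi} \<and> g ` {0..<2*pi} = C \<and>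
     (\<forall>t. \<exists>d. (g has_vector_derivative d) (at t) \<and>
              d = complex_of_real (cmod d) * \<i> * exp (\<i> * complex_of_real t))"

definition tube :: "(real \<Rightarrow> complex) \<Rightarrow> (real \<Rightarrow> real \<Rightarrow> complex) \<Rightarrow> (complex \<times> real) set" where
  "tube c0 \<gamma> = (\<lambda>(\<theta>, z). (c0 z + \<gamma> z \<theta>, z)) ` (UNIV \<times> {-1<..<1})"

text \<open>Transversely convex tube in standard position (data c0, gamma);
  each cross-section oval has (area) centroid at the origin.\<close>
definition tc_tube_std :: "(real \<Rightarrow> complex) \<Rightarrow> (real \<Rightarrow> real \<Rightarrow> complex) \<Rightarrow> bool" where
  "tc_tube_std c0 \<gamma> \<longleftrightarrow>
     C2_on {-1<..<1} c0 \<and>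
     C2_on (UNIV \<times> {-1<..<1}) (\<lambda>(\<theta>, z). \<gamma> z \<theta>) \<and>
     (\<forall>z\<in>{-1<..<1}. oval_param (\<gamma> z) \<and>
        integral (inside (\<gamma> z ` {0..<2*pi})) (\<lambda>p. p) = 0)"

definition hsec :: "(complex \<times> real) set \<Rightarrow> real \<Rightarrow> complex set" where
  "hsec T z = {p. (p, z) \<in> T}"

definition tsec :: "(complex \<times> real) set \<Rightarrow> complex \<Rightarrow> real \<Rightarrow> real \<Rightarrow> complex set" where
  "tsec T \<tau> b \<epsilon> = {p. (p, \<epsilon> * (p \<bullet> \<tau>) + b) \<in> T}"

definition central_about :: "complex set \<Rightarrow> complex \<Rightarrow> bool" where
  "central_about S c \<longleftrightarrow> (\<forall>p\<in>S. 2 * c - p \<in> S)"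

definition Gamma_star :: "(real \<Rightarrow> real \<Rightarrow> complex) \<Rightarrow> real \<Rightarrow> real \<Rightarrow> complex" where
  "Gamma_star \<Gamma> \<theta> z = (\<Gamma> \<theta> z - \<Gamma> (\<theta> + pi) z) / 2"

definition tilt_centrix ::
  "(real \<Rightarrow> real \<Rightarrow> complex) \<Rightarrow> (real \<Rightarrow> real \<Rightarrow> real) \<Rightarrow> (real \<Rightarrow> real \<Rightarrow> real)
     \<Rightarrow> real \<Rightarrow> real \<Rightarrow> complex" where
  "tilt_centrix \<Gamma> \<zeta> \<theta>e \<epsilon> \<theta> =
     (\<Gamma> (\<theta>e \<epsilon> \<theta>) (\<zeta> \<epsilon> (\<theta>e \<epsilon> \<theta>)) + \<Gamma> (\<theta>e \<epsilon> (\<theta> + pi)) (\<zeta> \<epsilon> (\<theta>e \<epsilon> (\<theta> + pi)))) / 2"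

end

theory Submission
  imports Defs
begin

lemma periodic_nat:
  fixes g :: "real \<Rightarrow> 'a"
  assumes per: "\<forall>t. g (t + 2*pi) = g t"
  shows "g (t + 2*pi*real n) = g t"
proof (induction n arbitrary: t)
  case 0 then show ?case by simp
next
  case (Suc n)
  have "g (t + 2*pi*real (Suc n)) = g ((t + 2*pi*real n) + 2*pi)" by (simp add: algebra_simps)
  also have "\<dots> = g (t + 2*pi*real n)" using per by blast
  finally show ?case using Suc by simp
qed

lemma periodic_int:
  fixes g :: "real \<Rightarrow> 'a"
  assumes per: "\<forall>t. g (t + 2*pi) = g t"
  shows "g (t + 2*pi * of_int k) = g t"
proof (cases "k \<ge> 0")
  case True
  then obtain n where "k = int n" by (metis nonneg_eq_int)
  then show ?thesis using periodic_nat[OF per, of t n] by simp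
next
  case False
  then obtain n where k: "k = - int n" by (metis neg_int_cases linorder_not_le less_imp_le)
  have "g t = g ((t - 2*pi*real n) + 2*pi*real n)" by simp
  also have "\<dots> = g (t - 2*pi*real n)" using periodic_nat[OF per] by blast
  finally show ?thesis using k by simp
qed

lemma reduce_mod:
  fixes u c :: real
  shows "\<exists>k::int. c \<le> u + 2*pi * of_int k \<and> u + 2*pi * of_int k < c + 2*pi"
proof -
  define x where "x = (u - c) / (2*pi)"
  have f1: "of_int \<lfloor>x\<rfloor> \<le> x" "x < of_int \<lfloor>x\<rfloor> + 1" by linarith+
  have ux: "u - c = 2*pi*x" unfolding x_def by simp
  have e: "u + 2*pi * of_int (- \<lfloor>x\<rfloor>) = c + 2*pi*(x - of_int \<lfloor>x\<rfloor>)"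
    using ux by (simp add: algebra_simps)
  have "0 \<le> 2*pi*(x - of_int \<lfloor>x\<rfloor>)" using f1 by simp
  moreover have "2*pi*(x - of_int \<lfloor>x\<rfloor>) < 2*pi" using f1 by (simp; linarith)
  ultimately show ?thesis using e by (intro exI[of _ "- \<lfloor>x\<rfloor>"]) linarith
qed

lemma periodic_inj:
  fixes g :: "real \<Rightarrow> 'a"
  assumes per: "\<forall>t. g (t + 2*pi) = g t" and inj: "inj_on g {0..<2*pi}" and eq: "g a = g b"
  shows "\<exists>k::int. a = b + 2*pi * of_int k"
proof -
  obtain ka :: int where ka: "0 \<le> a + 2*pi*ka" "a + 2*pi*ka < 0 + 2*pi" using reduce_mod[of 0 a] by blast
  obtain kb :: int where kb: "0 \<le> b + 2*pi*kb" "b + 2*pi*kb < 0 + 2*pi" using reduce_mod[of 0 b] by blast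
  have "g (a + 2*pi*ka) = g (b + 2*pi*kb)" using periodic_int[OF per] eq by simp
  then have "a + 2*pi*ka = b + 2*pi*kb" using inj ka kb by (auto simp: inj_on_def)
  then have "a = b + 2*pi * of_int (kb - ka)" by (simp add: algebra_simps)
  then show ?thesis by blast
qed

lemma inner_support_dir:
  "(complex_of_real r * \<i> * exp (\<i> * complex_of_real s)) \<bullet> cis t = r * sin (t - s)"
  by (simp add: inner_complex_def cis_conv_exp[symmetric] sin_diff algebra_simps)

lemma inner_support_dir2:
  "(\<i> * exp (\<i> * complex_of_real s)) \<bullet> cis t = sin (t - s)"
  using inner_support_dir[of 1 s t] by simp

lemma supp_hderiv:
  fixes g :: "real \<Rightarrow> complex"
  assumes der: "\<forall>t. \<exists>d. (g has_vector_derivative d) (at t) \<and>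
              d = complex_of_real (cmod d) * \<i> * exp (\<i> * complex_of_real t)"
  shows "\<exists>r\<ge>0. ((\<lambda>s. g s \<bullet> cis t) has_real_derivative r * sin (t - s)) (at s)
           \<and> (r = 0 \<longrightarrow> (g has_derivative (\<lambda>h. 0)) (at s))"
proof -
  obtain d where d: "(g has_vector_derivative d) (at s)"
     "d = complex_of_real (cmod d) * \<i> * exp (\<i> * complex_of_real s)"
    using der by blast
  have "((\<lambda>s. g s \<bullet> cis t) has_derivative (\<lambda>h. (h *\<^sub>R d) \<bullet> cis t)) (at s)"
    using d(1) unfolding has_vector_derivative_def
    by (auto intro!: derivative_eq_intros)
  moreover have "(\<lambda>h. (h *\<^sub>R d) \<bullet> cis t) = (\<lambda>h. (cmod d * sin (t - s)) * h)"
  proof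
    fix h
    have "(h *\<^sub>R d) \<bullet> cis t = h * (d \<bullet> cis t)" by simp
    also have "d \<bullet> cis t = cmod d * sin (t - s)"
      by (subst d(2)) (rule inner_support_dir)
    finally show "(h *\<^sub>R d) \<bullet> cis t = (cmod d * sin (t - s)) * h" by simp
  qed
  ultimately have D: "((\<lambda>s. g s \<bullet> cis t) has_real_derivative cmod d * sin (t - s)) (at s)"
    by (simp add: has_field_derivative_def)
  have "cmod d = 0 \<longrightarrow> (g has_derivative (\<lambda>h. 0)) (at s)"
    using d(1) unfolding has_vector_derivative_def by auto
  then show ?thesis using D by (intro exI[of _ "cmod d"]) auto
qed

locale supp_curve =
  fixes g :: "real \<Rightarrow> complex"
  assumes per: "\<forall>t. g (t + 2*pi) = g t"
    and inj: "inj_on g {0..<2*pi}"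
    and der: "\<forall>t. \<exists>d. (g has_vector_derivative d) (at t) \<and>
              d = complex_of_real (cmod d) * \<i> * exp (\<i> * complex_of_real t)"
begin

lemma hd: "\<exists>r\<ge>0. ((\<lambda>s. g s \<bullet> cis t) has_real_derivative r * sin (t - s)) (at s)
           \<and> (r = 0 \<longrightarrow> (g has_derivative (\<lambda>h. 0)) (at s))"
  using supp_hderiv[OF der] .

lemma mono_left:
  assumes "t - pi \<le> a" "a \<le> b" "b \<le> t"
  shows "g a \<bullet> cis t \<le> g b \<bullet> cis t"
proof (rule DERIV_nonneg_imp_nondecreasing[OF assms(2)])
  fix x assume "a \<le> x" "x \<le> b"
  then have "0 \<le> sin (t - x)" using assms by (intro sin_ge_zero) auto
  then show "\<exists>y. ((\<lambda>s. g s \<bullet> cis t) has_real_derivative y) (at x) \<and> 0 \<le> y"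
    using hd[of t x] by (metis mult_nonneg_nonneg)
qed

lemma mono_right:
  assumes "t \<le> a" "a \<le> b" "b \<le> t + pi"
  shows "g b \<bullet> cis t \<le> g a \<bullet> cis t"
proof (rule DERIV_nonpos_imp_nonincreasing[OF assms(2)])
  fix x assume "a \<le> x" "x \<le> b"
  then have "0 \<le> sin (x - t)" using assms by (intro sin_ge_zero) auto
  moreover have "sin (t - x) = - sin (x - t)" by (metis minus_diff_eq sin_minus)
  ultimately have "sin (t - x) \<le> 0" by simp
  then show "\<exists>y. ((\<lambda>s. g s \<bullet> cis t) has_real_derivative y) (at x) \<and> y \<le> 0"
    using hd[of t x] by (metis mult_nonneg_nonpos)
qed

lemma gint: "g (s + 2*pi * of_int k) = g s"
  using periodic_int[OF per] by blast

lemma global_max: "g s \<bullet> cis t \<le> g t \<bullet> cis t"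
proof -
  obtain k :: int where k: "t - pi \<le> s + 2*pi * of_int k" "s + 2*pi * of_int k < t - pi + 2*pi"
    using reduce_mod by blast
  define s' where "s' = s + 2*pi * of_int k"
  have "g s = g s'" unfolding s'_def using gint by simp
  moreover have "g s' \<bullet> cis t \<le> g t \<bullet> cis t"
  proof (cases "s' \<le> t")
    case True then show ?thesis using mono_left[of t s' t] k s'_def by auto
  next
    case False then show ?thesis using mono_right[of t t s'] k s'_def by auto
  qed
  ultimately show ?thesis by simp
qed

lemma no_const:
  assumes "a < b" "b - a < 2*pi"
    and "\<And>x. a < x \<Longrightarrow> x < b \<Longrightarrow> (g has_derivative (\<lambda>h. 0)) (at x)"
  shows False
proof -
  have "g (a + (b-a)/3) = g (a + 2*(b-a)/3)"
    by (rule has_derivative_zero_unique_connected[of "{a<..<b}"]) (use assms in \<open>auto simp: field_simps\<close>)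
  then obtain k :: int where k: "a + (b-a)/3 = a + 2*(b-a)/3 + 2*pi * of_int k"
    using periodic_inj[OF per inj] by blast
  then have "2*pi * of_int k = - (b-a)/3" by linarith
  moreover have "0 < (b-a)/3" "(b-a)/3 < 2*pi" using assms by auto
  ultimately have A: "- (2*pi) < 2*pi * of_int k" "2*pi * of_int k < 0" by linarith+
  have "- 1 < real_of_int k"
  proof -
    have "(2*pi) * (- 1) < 2*pi * of_int k" using A by simp
    then show ?thesis using pi_gt_zero mult_less_cancel_left_pos[of "2*pi" "-1" "real_of_int k"] by linarith
  qed
  moreover have "real_of_int k < 0"
    using A pi_gt_zero by (simp add: mult_less_0_iff)
  ultimately have "- 1 < k" "k < 0" by linarith+
  then show False by linarith
qed

lemma local_improve:
  assumes nt: "\<not> (\<exists>k::int. u = t + 2*pi * of_int k)" and "\<delta> > 0"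
  shows "\<exists>u'. \<bar>u' - u\<bar> < \<delta> \<and> g u \<bullet> cis t < g u' \<bullet> cis t"
proof -
  let ?h = "\<lambda>s. g s \<bullet> cis t"
  obtain k :: int where k: "t - pi \<le> u + 2*pi * of_int k" "u + 2*pi * of_int k < t - pi + 2*pi"
    using reduce_mod by blast
  define v where "v = u + 2*pi * of_int k"
  have gv: "g v = g u" unfolding v_def using gint by simp
  have vt: "v \<noteq> t"
  proof
    assume "v = t"
    then have "u = t + 2*pi * of_int (-k)" unfolding v_def by simp
    then show False using nt by blast
  qed
  have shift: "g (x - 2*pi * of_int k) = g x" for x
    using gint[of "x - 2*pi * of_int k" k] by simp
  show ?thesis
  proof (cases "v < t")
    case True
    define e where "e = min (\<delta>/2) (t - v)"
    have e: "0 < e" "e < \<delta>" "e \<le> t - v" using True \<open>\<delta>>0\<close> unfolding e_def by auto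
    have le: "?h v \<le> ?h (v + e)" using mono_left[of t v "v+e"] e k v_def by auto
    show ?thesis
    proof (cases "?h v < ?h (v + e)")
      case True
      then show ?thesis using e gv shift[of "v+e"] v_def
        by (intro exI[of _ "v + e - 2*pi * of_int k"]) auto
    next
      case False
      then have eq: "?h v = ?h (v+e)" using le by simp
      have "False"
      proof (rule no_const[of v "v+e"])
        show "v < v + e" using e by simp
        show "v + e - v < 2*pi" using e k v_def by simp
        fix x assume x: "v < x" "x < v + e"
        obtain r where r: "r \<ge> 0" "(?h has_real_derivative r * sin (t - x)) (at x)"
          "r = 0 \<longrightarrow> (g has_derivative (\<lambda>h. 0)) (at x)" using hd[of t x] by blast
        have "r * sin (t - x) = 0"
        proof (rule DERIV_local_max[OF r(2)])
          show "0 < min (x - v) (v + e - x)" using x by simp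
          show "\<forall>y. \<bar>x - y\<bar> < min (x - v) (v + e - x) \<longrightarrow> ?h y \<le> ?h x"
          proof (intro allI impI)
            fix y assume y: "\<bar>x - y\<bar> < min (x - v) (v + e - x)"
            have "?h y \<le> ?h (v+e)" using mono_left[of t y "v+e"] y e k v_def by auto
            also have "\<dots> = ?h v" using eq by simp
            also have "\<dots> \<le> ?h x" using mono_left[of t v x] x e k v_def by auto
            finally show "?h y \<le> ?h x" .
          qed
        qed
        moreover have "sin (t - x) > 0" using x e k v_def by (intro sin_gt_zero) auto
        ultimately show "(g has_derivative (\<lambda>h. 0)) (at x)" using r by simp
      qed
      then show ?thesis by simp
    qed
  next
    case False
    then have vt': "t < v" using vt by simp
    define e where "e = min (\<delta>/2) (v - t)"
    have e: "0 < e" "e < \<delta>" "e \<le> v - t" using vt' \<open>\<delta>>0\<close> unfolding e_def by auto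
    have le: "?h v \<le> ?h (v - e)" using mono_right[of t "v-e" v] e k v_def by auto
    show ?thesis
    proof (cases "?h v < ?h (v - e)")
      case True
      then show ?thesis using e gv shift[of "v-e"] v_def
        by (intro exI[of _ "v - e - 2*pi * of_int k"]) auto
    next
      case False
      then have eq: "?h v = ?h (v-e)" using le by simp
      have "False"
      proof (rule no_const[of "v-e" v])
        show "v - e < v" using e by simp
        show "v - (v - e) < 2*pi" using e k v_def by simp
        fix x assume x: "v - e < x" "x < v"
        obtain r where r: "r \<ge> 0" "(?h has_real_derivative r * sin (t - x)) (at x)"
          "r = 0 \<longrightarrow> (g has_derivative (\<lambda>h. 0)) (at x)" using hd[of t x] by blast
        have "r * sin (t - x) = 0"
        proof (rule DERIV_local_max[OF r(2)])
          show "0 < min (x - (v - e)) (v - x)" using x by simp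
          show "\<forall>y. \<bar>x - y\<bar> < min (x - (v - e)) (v - x) \<longrightarrow> ?h y \<le> ?h x"
          proof (intro allI impI)
            fix y assume y: "\<bar>x - y\<bar> < min (x - (v - e)) (v - x)"
            have "?h y \<le> ?h (v-e)" using mono_right[of t "v-e" y] y e k v_def by auto
            also have "\<dots> = ?h v" using eq by simp
            also have "\<dots> \<le> ?h x" using mono_right[of t x v] x e k v_def by auto
            finally show "?h y \<le> ?h x" .
          qed
        qed
        moreover have "sin (t - x) < 0"
        proof -
          have "0 < sin (x - t)" using x e k v_def by (intro sin_gt_zero) auto
          moreover have "sin (t - x) = - sin (x - t)" by (metis minus_diff_eq sin_minus)
          ultimately show ?thesis by simp
        qed
        ultimately show "(g has_derivative (\<lambda>h. 0)) (at x)" using r by simp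
      qed
      then show ?thesis by simp
    qed
  qed
qed

end

lemma int_small:
  assumes "\<bar>2*pi * real_of_int k\<bar> < 2*pi" shows "k = 0"
proof -
  have "2*pi * \<bar>real_of_int k\<bar> < 2*pi * 1" using assms by (simp add: abs_mult)
  moreover have "(0::real) < 2*pi" by simp
  ultimately have "\<bar>real_of_int k\<bar> < 1" using mult_less_cancel_left_pos by blast
  then show ?thesis by linarith
qed

lemma periodic_local:
  fixes f :: "real \<Rightarrow> 'a::metric_space"
  assumes cont: "continuous_on UNIV f" and per: "\<forall>t. f (t + 2*pi) = f t"
    and inj: "inj_on f {0..<2*pi}" and d: "0 < \<delta>" "\<delta> \<le> pi"
  shows "\<exists>\<eta>>0. \<forall>s. dist (f s) (f \<sigma>) < \<eta> \<longrightarrow> (\<exists>k::int. \<bar>s + 2*pi * of_int k - \<sigma>\<bar> < \<delta>)"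
proof -
  define K where "K = {\<sigma>-pi..\<sigma>-\<delta>} \<union> {\<sigma>+\<delta>..\<sigma>+pi}"
  have "compact K" unfolding K_def by (intro compact_Un compact_Icc)
  moreover have "K \<noteq> {}" using d unfolding K_def by auto
  moreover have "continuous_on K (\<lambda>s. dist (f s) (f \<sigma>))"
    by (intro continuous_intros continuous_on_subset[OF cont]) auto
  ultimately have "\<exists>x\<in>K. \<forall>y\<in>K. dist (f x) (f \<sigma>) \<le> dist (f y) (f \<sigma>)"
    by (rule continuous_attains_inf)
  then obtain x0 where x0: "x0 \<in> K" "\<And>y. y \<in> K \<Longrightarrow> dist (f x0) (f \<sigma>) \<le> dist (f y) (f \<sigma>)"
    by blast
  have "f x0 \<noteq> f \<sigma>"
  proof
    assume "f x0 = f \<sigma>"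
    then obtain k :: int where k: "x0 = \<sigma> + 2*pi * of_int k" using periodic_inj[OF per inj] by blast
    have "\<delta> \<le> \<bar>x0 - \<sigma>\<bar>" "\<bar>x0 - \<sigma>\<bar> \<le> pi" using x0(1) d unfolding K_def by auto
    then have "\<bar>2*pi * of_int k\<bar> < 2*pi" "2*pi * of_int k \<noteq> 0" using k d pi_gt_zero by auto
    then show False using int_small by auto
  qed
  then have pos: "0 < dist (f x0) (f \<sigma>)" by simp
  show ?thesis
  proof (intro exI[of _ "dist (f x0) (f \<sigma>)"] conjI allI impI)
    show "0 < dist (f x0) (f \<sigma>)" by (fact pos)
    fix s assume s: "dist (f s) (f \<sigma>) < dist (f x0) (f \<sigma>)"
    obtain k :: int where k: "\<sigma> - pi \<le> s + 2*pi * of_int k" "s + 2*pi * of_int k < \<sigma> - pi + 2*pi"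
      using reduce_mod by blast
    have "f (s + 2*pi * of_int k) = f s" using periodic_int[OF per] by blast
    show "\<exists>k::int. \<bar>s + 2*pi * of_int k - \<sigma>\<bar> < \<delta>"
    proof (rule ccontr)
      assume "\<not> ?thesis"
      then have "\<not> \<bar>s + 2*pi * of_int k - \<sigma>\<bar> < \<delta>" by blast
      then have "s + 2*pi * of_int k \<in> K" using k unfolding K_def by (auto simp: abs_if split: if_splits)
      then have "dist (f x0) (f \<sigma>) \<le> dist (f s) (f \<sigma>)"
        using x0(2) \<open>f (s + 2*pi * of_int k) = f s\<close> by metis
      then show False using s by simp
    qed
  qed
qed

lemma sign_persist:
  fixes F :: "'p::metric_space \<Rightarrow> real \<Rightarrow> real"
  assumes cont: "continuous_on (U \<times> I) (\<lambda>(p,s). F p s)" and "p1 \<in> U" "s \<in> I" "0 < F p1 s"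
  shows "\<exists>d>0. \<forall>p\<in>U. dist p p1 < d \<longrightarrow> 0 < F p s"
proof -
  obtain d where d: "d > 0" "\<And>x'. x' \<in> U \<times> I \<Longrightarrow> dist x' (p1,s) < d \<Longrightarrow>
      dist ((\<lambda>(p,s). F p s) x') ((\<lambda>(p,s). F p s) (p1,s)) < F p1 s"
    using cont assms(2-4) unfolding continuous_on_iff by (metis mem_Sigma_iff)
  show ?thesis
  proof (intro exI conjI ballI impI)
    fix p assume p: "p \<in> U" "dist p p1 < d"
    have "dist (F p s) (F p1 s) < F p1 s" using d(2)[of "(p,s)"] p assms(3) by (simp add: dist_Pair_Pair)
    then show "0 < F p s" by (simp add: dist_real_def)
  qed (use d in auto)
qed

lemma sign_persist_neg:
  fixes F :: "'p::metric_space \<Rightarrow> real \<Rightarrow> real"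
  assumes cont: "continuous_on (U \<times> I) (\<lambda>(p,s). F p s)" and "p1 \<in> U" "s \<in> I" "F p1 s < 0"
  shows "\<exists>d>0. \<forall>p\<in>U. dist p p1 < d \<longrightarrow> F p s < 0"
proof -
  have c: "continuous_on (U \<times> I) (\<lambda>(p,s). - F p s)"
    using continuous_on_minus[OF cont] by (simp add: case_prod_beta')
  show ?thesis using sign_persist[of U I "\<lambda>p s. - F p s", OF c assms(2,3)] assms(4) by simp
qed

lemma ift_cont:
  fixes F :: "'p::metric_space \<Rightarrow> real \<Rightarrow> real"
  assumes U: "open U" "p0 \<in> U" and a: "0 < a"
    and cont: "continuous_on (U \<times> {s0-a..s0+a}) (\<lambda>(p,s). F p s)"
    and dec: "\<And>p s1 s2. p \<in> U \<Longrightarrow> s0-a \<le> s1 \<Longrightarrow> s1 < s2 \<Longrightarrow> s2 \<le> s0+a \<Longrightarrow> F p s2 < F p s1"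
    and z: "F p0 s0 = 0"
  shows "\<exists>V \<sigma>. open V \<and> p0 \<in> V \<and> V \<subseteq> U \<and> \<sigma> p0 = s0 \<and>
     (\<forall>p\<in>V. s0 - a < \<sigma> p \<and> \<sigma> p < s0 + a \<and> F p (\<sigma> p) = 0) \<and> continuous_on V \<sigma>"
proof -
  let ?I = "{s0-a..s0+a}"
  have contp: "continuous_on {x..y} (F p)" if "p \<in> U" "s0-a \<le> x" "y \<le> s0+a" for p x y
  proof -
    have "continuous_on {x..y} ((\<lambda>(p,s). F p s) \<circ> (\<lambda>s. (p,s)))"
      by (rule continuous_on_compose[OF _ continuous_on_subset[OF cont]])
         (use that in \<open>auto intro!: continuous_intros\<close>)
    then show ?thesis by (simp add: o_def)
  qed
  have root: "\<exists>s. x < s \<and> s < y \<and> F p s = 0"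
    if "p \<in> U" "s0-a \<le> x" "x < y" "y \<le> s0+a" "0 < F p x" "F p y < 0" for p x y
  proof -
    have "\<exists>s. x \<le> s \<and> s \<le> y \<and> F p s = 0"
      by (rule IVT2'[of "F p" y 0 x]) (use that contp[of p x y] in auto)
    then obtain s where s: "x \<le> s" "s \<le> y" "F p s = 0" by blast
    then have "s \<noteq> x" "s \<noteq> y" using that by auto
    then have "x < s" "s < y" using s by auto
    then show ?thesis using s(3) by blast
  qed
  have uniq: "s1 = s2" if "p \<in> U" "s0-a \<le> s1" "s1 \<le> s0+a" "s0-a \<le> s2" "s2 \<le> s0+a"
      "F p s1 = 0" "F p s2 = 0" for p s1 s2
    using dec[of p s1 s2] dec[of p s2 s1] that by (cases s1 s2 rule: linorder_cases) auto
  define V where "V = {p\<in>U. 0 < F p (s0-a) \<and> F p (s0+a) < 0}"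
  define \<sigma> where "\<sigma> p = (THE s. s0-a < s \<and> s < s0+a \<and> F p s = 0)" for p
  have \<sigma>: "s0-a < \<sigma> p \<and> \<sigma> p < s0+a \<and> F p (\<sigma> p) = 0" if "p \<in> V" for p
  proof -
    from that have "p \<in> U" "0 < F p (s0-a)" "F p (s0+a) < 0" unfolding V_def by auto
    then obtain s where s: "s0-a < s" "s < s0+a" "F p s = 0" using root[of p "s0-a" "s0+a"] a by auto
    show ?thesis unfolding \<sigma>_def
      by (rule theI[of _ s]) (use s uniq[OF \<open>p\<in>U\<close>] in auto)
  qed
  have \<sigma>_eq: "\<sigma> p = s" if "p \<in> V" "s0-a < s" "s < s0+a" "F p s = 0" for p s
    using \<sigma>[OF that(1)] uniq[of p s "\<sigma> p"] that unfolding V_def by auto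
  have p0V: "p0 \<in> V" unfolding V_def using dec[of p0 "s0-a" s0] dec[of p0 s0 "s0+a"] U a z by auto
  have openV: "open V"
    unfolding open_contains_ball
  proof
    fix p assume p: "p \<in> V"
    then have pU: "p \<in> U" and s1: "0 < F p (s0-a)" and s2: "F p (s0+a) < 0" unfolding V_def by auto
    obtain d1 where d1: "d1>0" "\<forall>q\<in>U. dist q p < d1 \<longrightarrow> 0 < F q (s0-a)"
      using sign_persist[OF cont pU _ s1] a by auto
    obtain d2 where d2: "d2>0" "\<forall>q\<in>U. dist q p < d2 \<longrightarrow> F q (s0+a) < 0"
      using sign_persist_neg[OF cont pU _ s2] a by auto
    obtain d3 where d3: "d3 > 0" "ball p d3 \<subseteq> U" using U(1) pU open_contains_ball by blast
    have "ball p (min d1 (min d2 d3)) \<subseteq> V"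
      using d1 d2 d3 unfolding V_def by (auto simp: dist_commute subset_iff)
    moreover have "min d1 (min d2 d3) > 0" using d1 d2 d3 by auto
    ultimately show "\<exists>e>0. ball p e \<subseteq> V" by blast
  qed
  have contV: "continuous_on V \<sigma>"
    unfolding continuous_on_iff
  proof (intro ballI allI impI)
    fix p and e :: real assume that: "p \<in> V" "0 < e"
    show "\<exists>d>0. \<forall>x'\<in>V. dist x' p < d \<longrightarrow> dist (\<sigma> x') (\<sigma> p) < e"
    proof -
      have pU: "p \<in> U" using that V_def by auto
      define e' where "e' = min (e/2) (min ((\<sigma> p - (s0-a))/2) ((s0+a - \<sigma> p)/2))"
      have e': "0 < e'" "e' < e" "s0-a < \<sigma> p - e'" "\<sigma> p + e' < s0+a"
      proof -
        have sp: "s0-a < \<sigma> p" "\<sigma> p < s0+a" using \<sigma>[OF that(1)] by auto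
        have m: "e' \<le> e/2" "e' \<le> (\<sigma> p - (s0-a))/2" "e' \<le> (s0+a - \<sigma> p)/2"
          unfolding e'_def by (simp_all only: min.cobounded1 min_le_iff_disj) (simp add: min_le_iff_disj)+
        have "0 < e'" unfolding e'_def using sp that(2) by auto
        moreover have "e' < e" using m(1) that(2) by linarith
        moreover have "s0-a < \<sigma> p - e'" using m(2) sp(1) by argo
        moreover have "\<sigma> p + e' < s0+a" using m(3) sp(2) by argo
        ultimately show "0 < e'" "e' < e" "s0-a < \<sigma> p - e'" "\<sigma> p + e' < s0+a" by blast+
      qed
      have s1: "0 < F p (\<sigma> p - e')" using dec[OF pU, of "\<sigma> p - e'" "\<sigma> p"] \<sigma>[OF that(1)] e' by auto
      have s2: "F p (\<sigma> p + e') < 0" using dec[OF pU, of "\<sigma> p" "\<sigma> p + e'"] \<sigma>[OF that(1)] e' by auto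
      obtain d1 where d1: "d1>0" "\<forall>q\<in>U. dist q p < d1 \<longrightarrow> 0 < F q (\<sigma> p - e')"
        using sign_persist[OF cont pU _ s1] e' by auto
      obtain d2 where d2: "d2>0" "\<forall>q\<in>U. dist q p < d2 \<longrightarrow> F q (\<sigma> p + e') < 0"
        using sign_persist_neg[OF cont pU _ s2] e' by auto
      show ?thesis
      proof (intro exI[of _ "min d1 d2"] conjI ballI impI)
        fix q assume q: "q \<in> V" "dist q p < min d1 d2"
        then have qU: "q \<in> U" unfolding V_def by auto
        obtain s where s: "\<sigma> p - e' < s" "s < \<sigma> p + e'" "F q s = 0"
          using root[OF qU, of "\<sigma> p - e'" "\<sigma> p + e'"] d1 d2 q qU e' by auto
        have "\<sigma> q = s" using \<sigma>_eq[OF q(1)] s e' by auto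
        then show "dist (\<sigma> q) (\<sigma> p) < e" using s e' by (simp add: dist_real_def abs_less_iff)
      qed (use d1 d2 in auto)
    qed
  qed
  have "\<sigma> p0 = s0" using \<sigma>_eq[OF p0V, of s0] a z by auto
  then show ?thesis using openV p0V contV \<sigma> V_def by (intro exI[of _ V] exI[of _ \<sigma>]) auto
qed

lemma ift_diff:
  fixes F :: "'p::real_normed_vector \<times> real \<Rightarrow> real" and \<sigma> :: "'p \<Rightarrow> real"
  assumes V: "open V" "p \<in> V" and cs: "continuous (at p) \<sigma>"
    and zero: "\<And>q. q \<in> V \<Longrightarrow> F (q, \<sigma> q) = 0"
    and dF: "(F has_derivative F') (at (p, \<sigma> p))" and c0: "F' (0,1) \<noteq> 0"
  shows "(\<sigma> has_derivative (\<lambda>h. - F' (h,0) / F' (0,1))) (at p)"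
proof -
  define c where "c = F' (0,1)"
  have c: "c \<noteq> 0" "\<bar>c\<bar> > 0" using c0 c_def by auto
  have blF: "bounded_linear F'" using dF has_derivative_bounded_linear by blast
  interpret F': bounded_linear F' by (fact blF)
  obtain K where K: "K > 0" "\<And>x. norm (F' x) \<le> norm x * K" using F'.pos_bounded by blast
  have lin: "F' (h, k) = F' (h, 0) + k * c" for h k
  proof -
    have "(h, k) = (h, 0) + k *\<^sub>R (0, 1)" by simp
    then have "F' (h,k) = F' ((h, 0) + k *\<^sub>R (0, 1))" by metis
    also have "\<dots> = F' (h,0) + F' (k *\<^sub>R (0, 1))" by (rule F'.add)
    also have "\<dots> = F' (h,0) + k * c" unfolding c_def F'.scale by simp
    finally show ?thesis .
  qed
  define L where "L h = - F' (h,0) / c" for h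
  have blL: "bounded_linear L"
  proof -
    have "bounded_linear (\<lambda>h::'p. (h, 0::real))" by (rule bounded_linear_Pair) (auto intro: bounded_linear_ident bounded_linear_zero)
    then have "bounded_linear (\<lambda>h. F' (h, 0))" using bounded_linear_compose[OF blF] by blast
    then have "bounded_linear (\<lambda>h. F' (h, 0) / c)"
      using bounded_linear_compose[OF bounded_linear_divide] by blast
    then have "bounded_linear (\<lambda>h. - (F' (h, 0) / c))" by (rule bounded_linear_minus)
    then show ?thesis unfolding L_def by simp
  qed
  define KL where "KL = K / \<bar>c\<bar>"
  have KL: "KL > 0" using K c unfolding KL_def by auto
  have Lb: "\<bar>L h\<bar> \<le> KL * norm h" for h
  proof -
    have "\<bar>F' (h,0)\<bar> \<le> norm h * K" using K(2)[of "(h,0)"] by (simp add: norm_Pair)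
    then show ?thesis unfolding L_def KL_def using c by (simp add: abs_divide divide_simps mult.commute)
  qed
  have "\<forall>e>0. \<exists>d>0. \<forall>q. norm (q - p) < d \<longrightarrow> norm (\<sigma> q - \<sigma> p - L (q - p)) \<le> e * norm (q - p)"
  proof (intro allI impI)
    fix e :: real assume e: "e > 0"
    define e1 where "e1 = min (\<bar>c\<bar>/2) (e * \<bar>c\<bar> / (2 + 2*KL))"
    have e1: "e1 > 0" "e1 \<le> \<bar>c\<bar>/2" "e1 \<le> e * \<bar>c\<bar> / (2 + 2*KL)"
    proof -
      show "e1 \<le> \<bar>c\<bar>/2" unfolding e1_def by (rule min.cobounded1)
      show "e1 \<le> e * \<bar>c\<bar> / (2 + 2*KL)" unfolding e1_def by (rule min.cobounded2)
      have "0 < \<bar>c\<bar>/2" using c by simp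
      moreover have "0 < e * \<bar>c\<bar> / (2 + 2*KL)" using c e KL by (intro divide_pos_pos mult_pos_pos) auto
      ultimately show "e1 > 0" unfolding e1_def by simp
    qed
    obtain d1 where d1: "d1 > 0" "\<And>y. norm (y - (p, \<sigma> p)) < d1 \<Longrightarrow>
        norm (F y - F (p, \<sigma> p) - F' (y - (p, \<sigma> p))) \<le> e1 * norm (y - (p, \<sigma> p))"
      using dF e1(1) unfolding has_derivative_at_alt by blast
    obtain d2 where d2: "d2 > 0" "\<And>q. dist q p < d2 \<Longrightarrow> dist (\<sigma> q) (\<sigma> p) < d1/2"
      using cs d1(1) unfolding continuous_at_eps_delta by (metis half_gt_zero)
    obtain d3 where d3: "d3 > 0" "ball p d3 \<subseteq> V" using V open_contains_ball by blast
    show "\<exists>d>0. \<forall>q. norm (q - p) < d \<longrightarrow> norm (\<sigma> q - \<sigma> p - L (q - p)) \<le> e * norm (q - p)"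
    proof (intro exI[of _ "min (d1/2) (min d2 d3)"] conjI allI impI)
      show "0 < min (d1/2) (min d2 d3)" using d1 d2 d3 by auto
      fix q assume q: "norm (q - p) < min (d1/2) (min d2 d3)"
      define nq where "nq = norm (q - p)"
      define ds where "ds = \<sigma> q - \<sigma> p"
      define A where "A = F' (q - p, 0)"
      have qV: "q \<in> V" using q d3 by (auto simp: dist_norm norm_minus_commute)
      have dsb: "\<bar>ds\<bar> < d1/2" using d2(2)[of q] q unfolding ds_def by (simp add: dist_norm norm_minus_commute)
      have np: "norm ((q, \<sigma> q) - (p, \<sigma> p)) \<le> nq + \<bar>ds\<bar>"
        unfolding nq_def ds_def by (simp add: norm_Pair sqrt_sum_squares_le_sum_abs del: real_sqrt_abs)
          (metis norm_ge_zero real_norm_def sqrt_sum_squares_le_sum_abs abs_of_nonneg)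
      have "nq < d1/2" using q nq_def by simp
      then have "norm ((q, \<sigma> q) - (p, \<sigma> p)) < d1" using np dsb by linarith
      then have est: "norm (F (q, \<sigma> q) - F (p, \<sigma> p) - F' ((q, \<sigma> q) - (p, \<sigma> p))) \<le> e1 * (nq + \<bar>ds\<bar>)"
        using d1(2) np e1(1) by (meson mult_left_mono less_imp_le order_trans)
      have "F' ((q, \<sigma> q) - (p, \<sigma> p)) = A + ds * c" unfolding A_def ds_def using lin[of "q-p" "\<sigma> q - \<sigma> p"] by simp
      then have est2: "\<bar>A + ds * c\<bar> \<le> e1 * (nq + \<bar>ds\<bar>)"
        using est zero[OF qV] zero[OF V(2)] by simp
      define X where "X = ds - L (q - p)"
      have "A + ds * c = c * X" unfolding X_def L_def A_def using c by (simp add: field_simps)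
      then have "\<bar>c\<bar> * \<bar>X\<bar> \<le> e1 * (nq + \<bar>ds\<bar>)" using est2 by (simp add: abs_mult)
      then have Xb: "\<bar>X\<bar> \<le> (e1 / \<bar>c\<bar>) * (nq + \<bar>ds\<bar>)" using c by (simp add: field_simps)
      have r1: "e1 / \<bar>c\<bar> \<le> 1/2" using e1(2) c by (simp add: field_simps)
      have r2: "e1 / \<bar>c\<bar> \<le> e / (2 + 2*KL)" using e1(3) c KL by (simp add: field_simps)
      have nq0: "nq \<ge> 0" unfolding nq_def by simp
      have "\<bar>X\<bar> \<le> (1/2) * (nq + \<bar>ds\<bar>)"
        using Xb r1 nq0 by (meson abs_ge_zero add_nonneg_nonneg mult_right_mono order_trans)
      moreover have "\<bar>ds\<bar> \<le> \<bar>X\<bar> + KL * nq" using Lb[of "q-p"] unfolding X_def nq_def by linarith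
      ultimately have "\<bar>ds\<bar> \<le> nq + 2 * (KL * nq)" by argo
      moreover have "(1 + 2*KL) * nq = nq + 2 * (KL * nq)" by (simp add: algebra_simps)
      ultimately have dsn: "\<bar>ds\<bar> \<le> (1 + 2*KL) * nq" by simp
      have "\<bar>X\<bar> \<le> (e / (2 + 2*KL)) * (nq + \<bar>ds\<bar>)"
        using Xb r2 nq0 by (meson abs_ge_zero add_nonneg_nonneg mult_right_mono order_trans)
      also have "\<dots> \<le> (e / (2 + 2*KL)) * ((2 + 2*KL) * nq)"
      proof (intro mult_left_mono)
        show "nq + \<bar>ds\<bar> \<le> (2 + 2*KL) * nq" using dsn by (simp add: algebra_simps)
      qed (use e KL in auto)
      also have "\<dots> = e * nq" using KL by (simp add: field_simps)
      finally show "norm (\<sigma> q - \<sigma> p - L (q - p)) \<le> e * norm (q - p)"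
        unfolding X_def ds_def nq_def by simp
    qed
  qed
  then have "(\<sigma> has_derivative L) (at p)" using blL unfolding has_derivative_at_alt by blast
  then show ?thesis unfolding L_def c_def .
qed

lemma range_periodic:
  fixes g :: "real \<Rightarrow> 'a"
  assumes per: "\<forall>t. g (t + 2*pi) = g t"
  shows "range g = g ` {0..<2*pi}"
proof
  show "range g \<subseteq> g ` {0..<2*pi}"
  proof
    fix y assume "y \<in> range g"
    then obtain x where x: "y = g x" by blast
    obtain k :: int where k: "0 \<le> x + 2*pi * of_int k" "x + 2*pi * of_int k < 0 + 2*pi"
      using reduce_mod by blast
    have "g (x + 2*pi * of_int k) = g x" using periodic_int[OF per] by blast
    moreover have "x + 2*pi * of_int k \<in> {0..<2*pi}" using k by simp
    ultimately show "y \<in> g ` {0..<2*pi}" using x by (metis image_eqI)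
  qed
qed auto

lemma parallel_zero:
  fixes a b :: complex
  assumes "a \<bullet> cis t = 0" "b \<bullet> cis t = 0"
  shows "Im (cnj a * b) = 0"
proof -
  have A: "Re a * cos t + Im a * sin t = 0" "Re b * cos t + Im b * sin t = 0"
    using assms by (simp_all add: inner_complex_def)
  have I: "Im (cnj a * b) = Re a * Im b - Im a * Re b" by simp
  have e1: "Re a * cos t = - (Im a * sin t)" "Re b * cos t = - (Im b * sin t)" using A by linarith+
  have e2: "Im a * sin t = - (Re a * cos t)" "Im b * sin t = - (Re b * cos t)" using A by linarith+
  have "(Re a * Im b - Im a * Re b) * cos t = Im b * (Re a * cos t) - Im a * (Re b * cos t)"
    by (simp add: algebra_simps)
  also have "\<dots> = Im b * (- (Im a * sin t)) - Im a * (- (Im b * sin t))"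
    by (simp only: e1)
  finally have c: "(Re a * Im b - Im a * Re b) * cos t = 0" by (simp add: algebra_simps)
  have "(Re a * Im b - Im a * Re b) * sin t = Re a * (Im b * sin t) - Re b * (Im a * sin t)"
    by (simp add: algebra_simps)
  also have "\<dots> = Re a * (- (Re b * cos t)) - Re b * (- (Re a * cos t))"
    by (simp only: e2)
  finally have s: "(Re a * Im b - Im a * Re b) * sin t = 0" by (simp add: algebra_simps)
  have "(Re a * Im b - Im a * Re b) * (sin t ^ 2 + cos t ^ 2) =
      ((Re a * Im b - Im a * Re b) * sin t) * sin t + ((Re a * Im b - Im a * Re b) * cos t) * cos t"
    by (simp only: power2_eq_square distrib_left mult.assoc)
  also have "\<dots> = 0" by (simp only: c s mult_zero_left add_0)
  finally have "(Re a * Im b - Im a * Re b) * (sin t ^ 2 + cos t ^ 2) = 0" .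
  then show ?thesis using I by simp
qed

locale tube_data =
  fixes c0 :: "real \<Rightarrow> complex" and \<gamma> :: "real \<Rightarrow> real \<Rightarrow> complex" and \<Gamma> :: "real \<Rightarrow> real \<Rightarrow> complex"
    and D :: "real \<times> real \<Rightarrow> ((real \<times> real) \<Rightarrow>\<^sub>L complex)"
    and D2 :: "real \<times> real \<Rightarrow> ((real \<times> real) \<Rightarrow>\<^sub>L ((real \<times> real) \<Rightarrow>\<^sub>L complex))"
    and Dc :: "real \<Rightarrow> (real \<Rightarrow>\<^sub>L complex)"
    and Dc2 :: "real \<Rightarrow> (real \<Rightarrow>\<^sub>L (real \<Rightarrow>\<^sub>L complex))"
  assumes c0D: "\<And>w. w \<in> {-1<..<1} \<Longrightarrow> (c0 has_derivative blinfun_apply (Dc w)) (at w)"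
    and c0D2: "\<And>w. w \<in> {-1<..<1} \<Longrightarrow> (Dc has_derivative blinfun_apply (Dc2 w)) (at w)"
    and GD: "\<And>x. x \<in> UNIV \<times> {-1<..<1} \<Longrightarrow> ((\<lambda>(\<theta>, z). \<gamma> z \<theta>) has_derivative blinfun_apply (D x)) (at x)"
    and GD2: "\<And>x. x \<in> UNIV \<times> {-1<..<1} \<Longrightarrow> (D has_derivative blinfun_apply (D2 x)) (at x)"
    and D2c: "continuous_on (UNIV \<times> {-1<..<1}) D2"
    and oval: "\<And>w. w \<in> {-1<..<1} \<Longrightarrow> oval_param (\<gamma> w)"
    and supp: "\<And>w. w \<in> {-1<..<1} \<Longrightarrow> support_param (\<lambda>t. \<Gamma> t w) (hsec (tube c0 \<gamma>) w)"
begin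

definition "gd w s = blinfun_apply (D (s, w)) (1, 0)"
definition "gdd w s = blinfun_apply (blinfun_apply (D2 (s, w)) (1, 0)) (1, 0)"

lemma gamma_vd:
  assumes w: "w \<in> {-1<..<1}"
  shows "(\<gamma> w has_vector_derivative gd w s) (at s)"
proof -
  have "((\<lambda>s. (\<lambda>(\<theta>, z). \<gamma> z \<theta>) (s, w)) has_derivative (\<lambda>h. blinfun_apply (D (s, w)) (h, 0))) (at s)"
    by (rule has_derivative_compose[of "\<lambda>s. (s, w)" "\<lambda>h. (h, 0)"])
       (auto intro!: derivative_eq_intros GD w)
  moreover have "(\<lambda>h. blinfun_apply (D (s, w)) (h, 0)) = (\<lambda>h. h *\<^sub>R gd w s)"
  proof
    fix h :: real
    have "(h, 0::real) = h *\<^sub>R (1, 0)" by simp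
    then show "blinfun_apply (D (s, w)) (h, 0) = h *\<^sub>R gd w s"
      unfolding gd_def by (metis blinfun.scaleR_right)
  qed
  ultimately show ?thesis unfolding has_vector_derivative_def by simp
qed

lemma gd_vd:
  assumes w: "w \<in> {-1<..<1}"
  shows "(gd w has_vector_derivative gdd w s) (at s)"
proof -
  have "((\<lambda>s. D (s, w)) has_derivative (\<lambda>h. blinfun_apply (D2 (s, w)) (h, 0))) (at s)"
    by (rule has_derivative_compose[of "\<lambda>s. (s, w)" "\<lambda>h. (h, 0)"])
       (auto intro!: derivative_eq_intros GD2 w)
  then have "((\<lambda>s. blinfun_apply (D (s, w)) (1,0)) has_derivative
       (\<lambda>h. blinfun_apply (blinfun_apply (D2 (s, w)) (h, 0)) (1,0))) (at s)"
    by (auto intro!: derivative_eq_intros)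
  moreover have "(\<lambda>h. blinfun_apply (blinfun_apply (D2 (s, w)) (h, 0)) (1,0)) = (\<lambda>h. h *\<^sub>R gdd w s)"
  proof
    fix h :: real
    have "(h, 0::real) = h *\<^sub>R (1, 0)" by simp
    then show "blinfun_apply (blinfun_apply (D2 (s, w)) (h, 0)) (1,0) = h *\<^sub>R gdd w s"
      unfolding gdd_def by (metis blinfun.scaleR_right blinfun.scaleR_left)
  qed
  ultimately show ?thesis unfolding has_vector_derivative_def gd_def[abs_def] by simp
qed

lemma curv:
  assumes w: "w \<in> {-1<..<1}"
  shows "gd w s \<noteq> 0" "Im (cnj (gd w s) * gdd w s) \<noteq> 0"
proof -
  have vd: "vector_derivative (\<gamma> w) (at x) = gd w x" for x
    using gamma_vd[OF w] by (rule vector_derivative_at)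
  have "(\<lambda>s. vector_derivative (\<gamma> w) (at s)) = gd w" using vd by auto
  then have vd2: "vector_derivative (\<lambda>s. vector_derivative (\<gamma> w) (at s)) (at s) = gdd w s"
    using gd_vd[OF w] vector_derivative_at by metis
  show "gd w s \<noteq> 0" "Im (cnj (gd w s) * gdd w s) \<noteq> 0"
    using oval[OF w] unfolding oval_param_def by (metis vd vd2)+
qed

lemma crit_nonzero:
  assumes w: "w \<in> {-1<..<1}" and "gd w s \<bullet> cis t = 0"
  shows "gdd w s \<bullet> cis t \<noteq> 0"
  using parallel_zero[of "gd w s" t "gdd w s"] curv[OF w] assms(2) by auto

lemma hsec_eq:
  assumes w: "w \<in> {-1<..<1}"
  shows "hsec (tube c0 \<gamma>) w = range (\<lambda>s. c0 w + \<gamma> w s)"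
  using w unfolding hsec_def tube_def by auto

lemma Gsc: "w \<in> {-1<..<1} \<Longrightarrow> supp_curve (\<lambda>t. \<Gamma> t w)"
  using supp unfolding support_param_def supp_curve_def by blast

lemma Grange:
  assumes w: "w \<in> {-1<..<1}"
  shows "range (\<lambda>t. \<Gamma> t w) = range (\<lambda>s. c0 w + \<gamma> w s)"
proof -
  have per: "\<forall>t. \<Gamma> (t + 2*pi) w = \<Gamma> t w" and im: "(\<lambda>t. \<Gamma> t w) ` {0..<2*pi} = hsec (tube c0 \<gamma>) w"
    using supp[OF w] unfolding support_param_def by auto
  show ?thesis using range_periodic[of "\<lambda>t. \<Gamma> t w", OF per] im hsec_eq[OF w] by simp
qed

lemma base_max:
  assumes w: "w \<in> {-1<..<1}"
  shows "\<exists>s0. \<Gamma> t0 w = c0 w + \<gamma> w s0 \<and> (\<forall>s. \<gamma> w s \<bullet> cis t0 \<le> \<gamma> w s0 \<bullet> cis t0)"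
proof -
  interpret G: supp_curve "\<lambda>t. \<Gamma> t w" using Gsc[OF w] .
  have "\<Gamma> t0 w \<in> range (\<lambda>s. c0 w + \<gamma> w s)" using Grange[OF w] by blast
  then obtain s0 where s0: "\<Gamma> t0 w = c0 w + \<gamma> w s0" by blast
  have "\<gamma> w s \<bullet> cis t0 \<le> \<gamma> w s0 \<bullet> cis t0" for s
  proof -
    have "c0 w + \<gamma> w s \<in> range (\<lambda>t. \<Gamma> t w)" using Grange[OF w] by blast
    then obtain u where u: "c0 w + \<gamma> w s = \<Gamma> u w" by blast
    have "\<Gamma> u w \<bullet> cis t0 \<le> \<Gamma> t0 w \<bullet> cis t0" by (rule G.global_max)
    then have "(c0 w + \<gamma> w s) \<bullet> cis t0 \<le> (c0 w + \<gamma> w s0) \<bullet> cis t0" using u s0 by simp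
    then show ?thesis by (simp add: inner_add_left)
  qed
  then show ?thesis using s0 by blast
qed

definition "FF x s = gd (snd x) s \<bullet> cis (fst x)"

lemma FF_deriv:
  assumes w: "snd x \<in> {-1<..<1}"
  shows "(FF x has_real_derivative gdd (snd x) s \<bullet> cis (fst x)) (at s)"
proof -
  have "((\<lambda>s. gd (snd x) s \<bullet> cis (fst x)) has_derivative (\<lambda>h. (h *\<^sub>R gdd (snd x) s) \<bullet> cis (fst x))) (at s)"
    using gd_vd[OF w] unfolding has_vector_derivative_def by (auto intro!: derivative_eq_intros)
  moreover have "(\<lambda>h. (h *\<^sub>R gdd (snd x) s) \<bullet> cis (fst x)) = (*) (gdd (snd x) s \<bullet> cis (fst x))"
    by (auto simp: fun_eq_iff)
  ultimately show ?thesis unfolding FF_def[abs_def] has_field_derivative_def by simp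
qed

lemma psi_deriv:
  assumes w: "w \<in> {-1<..<1}"
  shows "((\<lambda>s. \<gamma> w s \<bullet> cis t) has_real_derivative FF (t, w) s) (at s)"
proof -
  have "((\<lambda>s. \<gamma> w s \<bullet> cis t) has_derivative (\<lambda>h. (h *\<^sub>R gd w s) \<bullet> cis t)) (at s)"
    using gamma_vd[OF w] unfolding has_vector_derivative_def by (auto intro!: derivative_eq_intros)
  moreover have "(\<lambda>h. (h *\<^sub>R gd w s) \<bullet> cis t) = (*) (gd w s \<bullet> cis t)"
    by (auto simp: fun_eq_iff)
  ultimately show ?thesis unfolding FF_def has_field_derivative_def by simp
qed

lemma base_crit:
  assumes w: "w \<in> {-1<..<1}" and mx: "\<forall>s. \<gamma> w s \<bullet> cis t0 \<le> \<gamma> w s0 \<bullet> cis t0"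
  shows "FF (t0, w) s0 = 0" "gdd w s0 \<bullet> cis t0 < 0"
proof -
  show F0: "FF (t0, w) s0 = 0"
    by (rule DERIV_local_max[OF psi_deriv[OF w], of 1]) (use mx in auto)
  have ne: "gdd w s0 \<bullet> cis t0 \<noteq> 0" using crit_nonzero[OF w] F0 unfolding FF_def by simp
  show "gdd w s0 \<bullet> cis t0 < 0"
  proof (rule ccontr)
    assume "\<not> ?thesis"
    then have pos: "0 < gdd w s0 \<bullet> cis t0" using ne by simp
    obtain d where d: "d > 0" "\<And>h. h > 0 \<Longrightarrow> h < d \<Longrightarrow> FF (t0,w) s0 < FF (t0,w) (s0 + h)"
      using DERIV_pos_inc_right[OF FF_deriv[of "(t0,w)" s0] ] pos w by auto
    obtain \<xi> where \<xi>: "s0 < \<xi>" "\<xi> < s0 + d/2"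
      "\<gamma> w (s0 + d/2) \<bullet> cis t0 - \<gamma> w s0 \<bullet> cis t0 = (s0 + d/2 - s0) * FF (t0, w) \<xi>"
      using MVT2[of s0 "s0 + d/2" "\<lambda>s. \<gamma> w s \<bullet> cis t0" "FF (t0, w)"] psi_deriv[OF w] d(1) by auto
    have "0 < FF (t0, w) \<xi>" using d(2)[of "\<xi> - s0"] \<xi> F0 by auto
    then have "0 < (s0 + d/2 - s0) * FF (t0, w) \<xi>" using d(1) by simp
    then have "\<gamma> w s0 \<bullet> cis t0 < \<gamma> w (s0 + d/2) \<bullet> cis t0" using \<xi>(3) by linarith
    then show False using mx by (meson not_le)
  qed
qed

end

context tube_data begin

lemma openUI: "open (UNIV \<times> {-1<..<1::real} :: (real \<times> real) set)"
  by (intro open_Times) auto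

lemma D_cont: "x \<in> UNIV \<times> {-1<..<1} \<Longrightarrow> continuous (at x) D"
  using GD2 has_derivative_continuous by blast

lemma D2_cont: "x \<in> UNIV \<times> {-1<..<1} \<Longrightarrow> continuous (at x) D2"
  using D2c openUI continuous_on_eq_continuous_at by blast

lemma Dc_cont: "w \<in> {-1<..<1} \<Longrightarrow> continuous (at w) Dc"
  using c0D2 has_derivative_continuous by blast

lemma isCont_cis_comp [continuous_intros]: "isCont f y \<Longrightarrow> isCont (\<lambda>x. cis (f x)) y"
  unfolding cis_conv_exp by (intro continuous_intros)

definition "FF2 y = FF (fst y) (snd y)"

definition "dFF y k = blinfun_apply (blinfun_apply (D2 (snd y, snd (fst y))) (snd k, snd (fst k))) (1,0) \<bullet> cis (fst (fst y))
   + gd (snd (fst y)) (snd y) \<bullet> (fst (fst k) *\<^sub>R (\<i> * cis (fst (fst y))))"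

lemma FF2_alt: "FF2 = (\<lambda>y. blinfun_apply (D (snd y, snd (fst y))) (1,0) \<bullet> cis (fst (fst y)))"
  unfolding FF2_def FF_def gd_def by auto

lemma FF2_deriv:
  assumes "snd (fst y) \<in> {-1<..<1}"
  shows "(FF2 has_derivative dFF y) (at y)"
proof -
  have d1: "((\<lambda>y. D (snd y, snd (fst y))) has_derivative
      (\<lambda>k. blinfun_apply (D2 (snd y, snd (fst y))) (snd k, snd (fst k)))) (at y)"
    by (rule has_derivative_compose[of "\<lambda>y. (snd y, snd (fst y))" "\<lambda>k. (snd k, snd (fst k))"])
       (auto intro!: derivative_eq_intros GD2 assms)
  show ?thesis unfolding FF2_alt dFF_def gd_def
    by (rule derivative_eq_intros d1 | simp)+ (auto simp: fun_eq_iff algebra_simps)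
qed

lemma dFF_s: "dFF y ((0,0),1) = gdd (snd (fst y)) (snd y) \<bullet> cis (fst (fst y))"
  unfolding dFF_def gdd_def by simp

lemma FF2_cont:
  assumes "snd (fst y) \<in> {-1<..<1}"
  shows "continuous (at y) FF2"
  using FF2_deriv[OF assms] has_derivative_continuous by blast

lemma gdd_cont:
  assumes "snd (fst y) \<in> {-1<..<1}"
  shows "continuous (at y) (\<lambda>y. gdd (snd (fst y)) (snd y) \<bullet> cis (fst (fst y)))"
proof -
  have c1: "continuous (at y) (\<lambda>y. D2 (snd y, snd (fst y)))"
    by (rule continuous_at_compose[of y "\<lambda>y. (snd y, snd (fst y))" D2, unfolded o_def])
       (auto intro!: continuous_intros D2_cont assms)
  show ?thesis unfolding gdd_def
    by (intro continuous_intros c1)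
qed

end

context tube_data begin

lemma gamma_cont: "w \<in> {-1<..<1} \<Longrightarrow> continuous_on UNIV (\<gamma> w)"
  using gamma_vd has_vector_derivative_continuous continuous_at_imp_continuous_on by blast

lemma Gamma_cont_u: "w \<in> {-1<..<1} \<Longrightarrow> isCont (\<lambda>t. \<Gamma> t w) u"
proof -
  assume w: "w \<in> {-1<..<1}"
  then interpret G: supp_curve "\<lambda>t. \<Gamma> t w" using Gsc by blast
  show ?thesis using G.der has_vector_derivative_continuous by blast
qed

lemma ident_local:
  assumes w: "w \<in> {-1<..<1}" and \<delta>: "0 < \<delta>" "\<delta> \<le> pi"
    and locmax: "\<And>s. \<bar>s - \<sigma>\<bar> < \<delta> \<Longrightarrow> \<gamma> w s \<bullet> cis t \<le> \<gamma> w \<sigma> \<bullet> cis t"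
  shows "\<Gamma> t w = c0 w + \<gamma> w \<sigma>"
proof -
  interpret G: supp_curve "\<lambda>t. \<Gamma> t w" using Gsc[OF w] .
  have per: "\<forall>t. \<gamma> w (t + 2*pi) = \<gamma> w t" and inj: "inj_on (\<gamma> w) {0..<2*pi}"
    using oval[OF w] unfolding oval_param_def by auto
  obtain \<eta> where \<eta>: "\<eta> > 0" "\<And>s. dist (\<gamma> w s) (\<gamma> w \<sigma>) < \<eta> \<Longrightarrow> \<exists>k::int. \<bar>s + 2*pi * of_int k - \<sigma>\<bar> < \<delta>"
    using periodic_local[OF gamma_cont[OF w] per inj \<delta>] by blast
  have "c0 w + \<gamma> w \<sigma> \<in> range (\<lambda>t. \<Gamma> t w)" using Grange[OF w] by blast
  then obtain u where u: "c0 w + \<gamma> w \<sigma> = \<Gamma> u w" by blast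
  have "\<exists>k::int. u = t + 2*pi * of_int k"
  proof (rule ccontr)
    assume nt: "\<not> ?thesis"
    obtain d' where d': "d' > 0" "\<And>u'. dist u' u < d' \<Longrightarrow> dist (\<Gamma> u' w) (\<Gamma> u w) < \<eta>"
      using Gamma_cont_u[OF w, of u] \<eta>(1) unfolding continuous_at_eps_delta by blast
    obtain u' where u': "\<bar>u' - u\<bar> < d'" "\<Gamma> u w \<bullet> cis t < \<Gamma> u' w \<bullet> cis t"
      using G.local_improve[OF nt d'(1)] by blast
    have "\<Gamma> u' w \<in> range (\<lambda>s. c0 w + \<gamma> w s)" using Grange[OF w] by blast
    then obtain s' where s': "\<Gamma> u' w = c0 w + \<gamma> w s'" by blast
    have "dist (\<gamma> w s') (\<gamma> w \<sigma>) < \<eta>"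
    proof -
      have "dist (\<Gamma> u' w) (\<Gamma> u w) < \<eta>" using d'(2)[of u'] u'(1) by (simp add: dist_real_def)
      then show ?thesis unfolding s' u[symmetric] by simp
    qed
    then obtain k :: int where k: "\<bar>s' + 2*pi * of_int k - \<sigma>\<bar> < \<delta>" using \<eta>(2) by blast
    have "\<gamma> w (s' + 2*pi * of_int k) = \<gamma> w s'" using periodic_int[OF per] by blast
    then have "\<gamma> w s' \<bullet> cis t \<le> \<gamma> w \<sigma> \<bullet> cis t" using locmax[OF k] by simp
    then have "\<Gamma> u' w \<bullet> cis t \<le> \<Gamma> u w \<bullet> cis t" using s' u[symmetric] by (simp add: inner_add_left)
    then show False using u'(2) by simp
  qed
  then obtain k :: int where "u = t + 2*pi * of_int k" by blast
  then have "\<Gamma> u w = \<Gamma> t w" using G.gint by simp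
  then show ?thesis using u by simp
qed

end

context tube_data begin

lemma dist_pair_le: "dist (x, s) (y, r) \<le> dist x y + dist s r"
  by (simp add: dist_Pair_Pair) (metis zero_le_dist abs_of_nonneg sqrt_sum_squares_le_sum_abs)

lemma Gamma_C1:
  assumes z: "z \<in> {-1<..<1}"
  obtains N DG where "open N" "(t0,z) \<in> N" "N \<subseteq> UNIV \<times> {-1<..<1}"
    "\<And>x. x \<in> N \<Longrightarrow> ((\<lambda>x. \<Gamma> (fst x) (snd x)) has_derivative DG x) (at x)"
    "\<And>h. isCont (\<lambda>x. DG x h) (t0,z)"
proof -
  define x0 where "x0 = (t0, z)"
  obtain s0 where s0: "\<Gamma> t0 z = c0 z + \<gamma> z s0" "\<forall>s. \<gamma> z s \<bullet> cis t0 \<le> \<gamma> z s0 \<bullet> cis t0"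
    using base_max[OF z] by blast
  have F0: "FF x0 s0 = 0" and G0: "gdd z s0 \<bullet> cis t0 < 0"
    using base_crit[OF z s0(2)] unfolding x0_def by auto
  define G where "G y = gdd (snd (fst y)) (snd y) \<bullet> cis (fst (fst y))" for y :: "(real \<times> real) \<times> real"
  have Gc: "isCont G (x0, s0)" unfolding G_def[abs_def] by (rule gdd_cont) (use z in \<open>simp add: x0_def\<close>)
  obtain r1 where r1: "r1 > 0" "\<And>y. dist y (x0, s0) < r1 \<Longrightarrow> dist (G y) (G (x0,s0)) < - G (x0,s0)"
    using Gc G0 unfolding continuous_at_eps_delta G_def x0_def by (metis neg_0_less_iff_less fst_conv snd_conv)
  have Gneg: "G y < 0" if "dist y (x0, s0) < r1" for y
    using r1(2)[OF that] by (simp add: dist_real_def)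
  define r where "r = min r1 (min (z + 1) (1 - z))"
  have r: "r > 0" "r \<le> r1" "r \<le> z + 1" "r \<le> 1 - z" using r1 z unfolding r_def by auto
  define a where "a = min (r/2) 1"
  have a: "a > 0" "a \<le> r/2" "a \<le> 1" using r unfolding a_def by auto
  define U where "U = ball x0 (r/2) \<inter> (UNIV \<times> {-1<..<1})"
  have Uo: "open U" unfolding U_def using openUI by auto
  have x0U: "x0 \<in> U" unfolding U_def x0_def using r z by auto
  have UI: "x \<in> U \<Longrightarrow> snd x \<in> {-1<..<1}" for x unfolding U_def by auto
  have box: "G (x, s) < 0" if "x \<in> U" "s0 - a \<le> s" "s \<le> s0 + a" for x s
  proof (rule Gneg)
    have "dist x x0 < r/2" using that(1) unfolding U_def by (simp add: dist_commute)
    moreover have "dist s s0 \<le> a" using that(2,3) by (simp add: dist_real_def)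
    ultimately show "dist (x, s) (x0, s0) < r1" using dist_pair_le[of x s x0 s0] a r by linarith
  qed
  have dec: "FF x s2 < FF x s1" if "x \<in> U" "s0-a \<le> s1" "s1 < s2" "s2 \<le> s0+a" for x s1 s2
  proof (rule DERIV_neg_imp_decreasing[OF that(3)])
    fix s assume "s1 \<le> s" "s \<le> s2"
    then have "G (x, s) < 0" using box[OF that(1)] that by auto
    then show "\<exists>y. (FF x has_real_derivative y) (at s) \<and> y < 0"
      using FF_deriv[OF UI[OF that(1)], of s] unfolding G_def by auto
  qed
  have cont: "continuous_on (U \<times> {s0-a..s0+a}) (\<lambda>(p,s). FF p s)"
  proof -
    have "(\<lambda>(p,s). FF p s) = FF2" unfolding FF2_def by auto
    moreover have "continuous_on (U \<times> {s0-a..s0+a}) FF2"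
      by (rule continuous_at_imp_continuous_on) (auto intro!: FF2_cont simp: U_def)
    ultimately show ?thesis by simp
  qed
  obtain V \<sigma> where V: "open V" "x0 \<in> V" "V \<subseteq> U" "\<sigma> x0 = s0"
      "\<And>p. p \<in> V \<Longrightarrow> s0 - a < \<sigma> p \<and> \<sigma> p < s0 + a \<and> FF p (\<sigma> p) = 0" "continuous_on V \<sigma>"
    using ift_cont[OF Uo x0U a(1) cont dec F0] by blast
  have \<sigma>c: "isCont \<sigma> x" if "x \<in> V" for x using V(1,6) that continuous_on_eq_continuous_at by blast
  obtain d1 where d1: "d1 > 0" "\<And>x. dist x x0 < d1 \<Longrightarrow> dist (\<sigma> x) (\<sigma> x0) < a/2"
    using \<sigma>c[OF V(2)] a(1) unfolding continuous_at_eps_delta by (metis half_gt_zero)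
  define N where "N = V \<inter> ball x0 d1"
  have No: "open N" unfolding N_def using V(1) by auto
  have x0N: "x0 \<in> N" unfolding N_def using V(2) d1(1) by auto
  have NU: "N \<subseteq> U" unfolding N_def using V(3) by auto
  have NI: "N \<subseteq> UNIV \<times> {-1<..<1}" using NU unfolding U_def by auto
  have \<sigma>N: "\<bar>\<sigma> x - s0\<bar> < a/2" if "x \<in> N" for x
    using d1(2)[of x] that V(4) unfolding N_def by (simp add: dist_real_def dist_commute)
  have ident: "\<Gamma> (fst x) (snd x) = c0 (snd x) + \<gamma> (snd x) (\<sigma> x)" if xN: "x \<in> N" for x
  proof (rule ident_local)
    show w: "snd x \<in> {-1<..<1}" using NI xN by auto
    show "0 < a/2" "a/2 \<le> pi" using a pi_gt3 by auto
    have xU: "x \<in> U" and xV: "x \<in> V" using xN NU unfolding N_def by auto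
    have r0: "FF x (\<sigma> x) = 0" using V(5)[OF xV] by blast
    have xeq: "(fst x, snd x) = x" by simp
    fix s assume s: "\<bar>s - \<sigma> x\<bar> < a/2"
    have sb: "s0 - a < s" "s < s0 + a" using s \<sigma>N[OF xN] by (simp_all add: abs_less_iff; linarith)+
    have \<sigma>b: "s0 - a < \<sigma> x" "\<sigma> x < s0 + a" using V(5)[OF xV] by auto
    show "\<gamma> (snd x) s \<bullet> cis (fst x) \<le> \<gamma> (snd x) (\<sigma> x) \<bullet> cis (fst x)"
    proof (cases "s \<le> \<sigma> x")
      case True
      show ?thesis
      proof (rule DERIV_nonneg_imp_nondecreasing[OF True])
        fix \<xi> assume \<xi>: "s \<le> \<xi>" "\<xi> \<le> \<sigma> x"
        have "0 \<le> FF x \<xi>"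
        proof (cases "\<xi> = \<sigma> x")
          case True then show ?thesis using r0 by simp
        next
          case False then show ?thesis using dec[OF xU, of \<xi> "\<sigma> x"] \<xi> sb \<sigma>b r0 by auto
        qed
        then show "\<exists>y. ((\<lambda>s. \<gamma> (snd x) s \<bullet> cis (fst x)) has_real_derivative y) (at \<xi>) \<and> 0 \<le> y"
          using psi_deriv[OF w, of "fst x" \<xi>] xeq by auto
      qed
    next
      case False
      then have le: "\<sigma> x \<le> s" by simp
      show ?thesis
      proof (rule DERIV_nonpos_imp_nonincreasing[OF le])
        fix \<xi> assume \<xi>: "\<sigma> x \<le> \<xi>" "\<xi> \<le> s"
        have "FF x \<xi> \<le> 0"
        proof (cases "\<xi> = \<sigma> x")
          case True then show ?thesis using r0 by simp
        next
          case False then show ?thesis using dec[OF xU, of "\<sigma> x" \<xi>] \<xi> sb \<sigma>b r0 by auto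
        qed
        then show "\<exists>y. ((\<lambda>s. \<gamma> (snd x) s \<bullet> cis (fst x)) has_real_derivative y) (at \<xi>) \<and> y \<le> 0"
          using psi_deriv[OF w, of "fst x" \<xi>] xeq by auto
      qed
    qed
  qed
  define \<sigma>' where "\<sigma>' x h = - dFF (x, \<sigma> x) (h, 0) / dFF (x, \<sigma> x) ((0,0),1)" for x h
  have dFFneg: "dFF (x, \<sigma> x) ((0,0),1) < 0" if "x \<in> N" for x
  proof -
    have "x \<in> U" "x \<in> V" using that NU unfolding N_def by auto
    moreover have "s0 - a \<le> \<sigma> x" "\<sigma> x \<le> s0 + a" using V(5)[OF calculation(2)] by auto
    ultimately show ?thesis using box[of x "\<sigma> x"] unfolding dFF_s G_def by blast
  qed
  have \<sigma>d: "(\<sigma> has_derivative \<sigma>' x) (at x)" if "x \<in> N" for x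
  proof -
    have xV: "x \<in> V" using that unfolding N_def by auto
    have "(\<sigma> has_derivative (\<lambda>h. - dFF (x, \<sigma> x) (h, 0) / dFF (x, \<sigma> x) (0, 1))) (at x)"
    proof (rule ift_diff[OF No that \<sigma>c[OF xV]])
      show "FF2 (q, \<sigma> q) = 0" if "q \<in> N" for q using that V(5) unfolding FF2_def N_def by auto
      show "(FF2 has_derivative dFF (x, \<sigma> x)) (at (x, \<sigma> x))"
        by (rule FF2_deriv) (use that NI in auto)
      show "dFF (x, \<sigma> x) (0, 1) \<noteq> 0" using dFFneg[OF that] by (simp add: zero_prod_def)
    qed
    then show ?thesis unfolding \<sigma>'_def by (simp add: zero_prod_def)
  qed
  define DG where "DG x h = blinfun_apply (Dc (snd x)) (snd h) + blinfun_apply (D (\<sigma> x, snd x)) (\<sigma>' x h, snd h)" for x h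
  have DGd: "((\<lambda>x. \<Gamma> (fst x) (snd x)) has_derivative DG x) (at x)" if xN: "x \<in> N" for x
  proof -
    have w: "snd x \<in> {-1<..<1}" using NI xN by auto
    have d1: "((\<lambda>x. c0 (snd x)) has_derivative (\<lambda>h. blinfun_apply (Dc (snd x)) (snd h))) (at x)"
      by (rule has_derivative_compose[of snd snd]) (auto intro!: derivative_eq_intros c0D w)
    have d2: "((\<lambda>x. (\<lambda>(\<theta>, z). \<gamma> z \<theta>) (\<sigma> x, snd x)) has_derivative
        (\<lambda>h. blinfun_apply (D (\<sigma> x, snd x)) (\<sigma>' x h, snd h))) (at x)"
      by (rule has_derivative_compose[of "\<lambda>x. (\<sigma> x, snd x)" "\<lambda>h. (\<sigma>' x h, snd h)"])
         (auto intro!: derivative_eq_intros \<sigma>d[OF xN] GD w)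
    have "((\<lambda>x. c0 (snd x) + \<gamma> (snd x) (\<sigma> x)) has_derivative DG x) (at x)"
      using has_derivative_add[OF d1 d2] unfolding DG_def by simp
    then show ?thesis
      by (rule has_derivative_transform_within_open[OF _ No xN]) (use ident in auto)
  qed
  have DGc: "isCont (\<lambda>x. DG x h) x0" for h
  proof -
    have x0V: "x0 \<in> V" using V(2) .
    have z0: "(s0, z) \<in> UNIV \<times> {-1<..<1}" using z by auto
    have c\<sigma>: "isCont (\<lambda>x. (\<sigma> x, snd x)) x0" using \<sigma>c[OF x0V] by (intro continuous_intros)
    have cD: "isCont (\<lambda>x. D (\<sigma> x, snd x)) x0"
      using continuous_at_compose[OF c\<sigma>, of D] D_cont[of "(\<sigma> x0, snd x0)"] V(4) z0
      unfolding o_def x0_def by auto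
    have cD2: "isCont (\<lambda>x. D2 (\<sigma> x, snd x)) x0"
      using continuous_at_compose[OF c\<sigma>, of D2] D2_cont[of "(\<sigma> x0, snd x0)"] V(4) z0
      unfolding o_def x0_def by auto
    have cDc: "isCont (\<lambda>x. Dc (snd x)) x0"
      using continuous_at_compose[of x0 snd Dc] Dc_cont[OF z] unfolding o_def x0_def
      by (auto intro!: continuous_intros)
    have cdFF: "isCont (\<lambda>x. dFF (x, \<sigma> x) k) x0" for k
      unfolding dFF_def gd_def fst_conv snd_conv
      by (intro continuous_intros cD cD2)
    have ne: "dFF (x0, \<sigma> x0) ((0,0),1) \<noteq> 0" using dFFneg[OF x0N] by simp
    show ?thesis unfolding DG_def \<sigma>'_def
      by (intro continuous_intros cD cDc cdFF ne)
  qed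
  show ?thesis
    by (rule that[OF No _ NI DGd DGc[unfolded x0_def]]) (use x0N x0_def in auto)
qed

end

lemma pair_lin:
  assumes "bounded_linear L"
  shows "L (a, b) = a *\<^sub>R L (1, 0) + b *\<^sub>R L (0, 1)"
proof -
  interpret L: bounded_linear L by fact
  have "(a, b) = a *\<^sub>R (1, 0) + b *\<^sub>R (0::real, 1::real)" by simp
  then have "L (a, b) = L (a *\<^sub>R (1, 0) + b *\<^sub>R (0, 1))" by metis
  also have "\<dots> = a *\<^sub>R L (1, 0) + b *\<^sub>R L (0, 1)" by (simp only: L.add L.scale)
  finally show ?thesis .
qed

lemma pair_deriv_parts:
  fixes f :: "real \<times> real \<Rightarrow> 'a::real_normed_vector"
  assumes d: "(f has_derivative L) (at (s, w))"
  shows "((\<lambda>s. f (s, w)) has_vector_derivative L (1, 0)) (at s)"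
    and "((\<lambda>w. f (s, w)) has_vector_derivative L (0, 1)) (at w)"
proof -
  have bl: "bounded_linear L" using d has_derivative_bounded_linear by blast
  have "((\<lambda>s. f (s, w)) has_derivative (\<lambda>h. L (h, 0))) (at s)"
    by (rule has_derivative_compose[of "\<lambda>s. (s, w)" "\<lambda>h. (h, 0)"]) (auto intro!: derivative_eq_intros d)
  moreover have "(\<lambda>h. L (h, 0)) = (\<lambda>h. h *\<^sub>R L (1, 0))"
    by (rule ext) (subst pair_lin[OF bl], simp)
  ultimately show "((\<lambda>s. f (s, w)) has_vector_derivative L (1, 0)) (at s)"
    unfolding has_vector_derivative_def by simp
  have "((\<lambda>w. f (s, w)) has_derivative (\<lambda>h. L (0, h))) (at w)"
    by (rule has_derivative_compose[of "\<lambda>w. (s, w)" "\<lambda>h. (0, h)"]) (auto intro!: derivative_eq_intros d)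
  moreover have "(\<lambda>h. L (0, h)) = (\<lambda>h. h *\<^sub>R L (0, 1))"
    by (rule ext) (subst pair_lin[OF bl], simp)
  ultimately show "((\<lambda>w. f (s, w)) has_vector_derivative L (0, 1)) (at w)"
    unfolding has_vector_derivative_def by simp
qed

context tube_data begin

lemma antipodal:
  assumes w: "w \<in> {-1<..<1}" and cen: "central_about (hsec (tube c0 \<gamma>) w) cw"
  shows "\<Gamma> (t + pi) w = 2 * cw - \<Gamma> t w"
proof -
  interpret G: supp_curve "\<lambda>t. \<Gamma> t w" using Gsc[OF w] .
  have R: "range (\<lambda>t. \<Gamma> t w) = hsec (tube c0 \<gamma>) w" using Grange[OF w] hsec_eq[OF w] by simp
  have "2 * cw - \<Gamma> t w \<in> range (\<lambda>t. \<Gamma> t w)" using cen R unfolding central_about_def by auto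
  then obtain u where u: "2 * cw - \<Gamma> t w = \<Gamma> u w" by blast
  have cispi: "cis (t + pi) = - cis t" by (simp add: cis_def complex_eq_iff)
  have gm: "\<Gamma> v w \<bullet> cis (t + pi) \<le> \<Gamma> u w \<bullet> cis (t + pi)" for v
  proof -
    have "2 * cw - \<Gamma> v w \<in> range (\<lambda>t. \<Gamma> t w)" using cen R unfolding central_about_def by auto
    then obtain v' where v': "2 * cw - \<Gamma> v w = \<Gamma> v' w" by blast
    have ut: "\<Gamma> t w = 2 * cw - \<Gamma> u w" using u by (simp add: algebra_simps)
    have "\<Gamma> v' w \<bullet> cis t \<le> \<Gamma> t w \<bullet> cis t" by (rule G.global_max)
    then have "(2 * cw - \<Gamma> v w) \<bullet> cis t \<le> (2 * cw - \<Gamma> u w) \<bullet> cis t"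
      unfolding v'[symmetric] ut .
    then show ?thesis unfolding cispi by (simp add: inner_diff_left)
  qed
  have "\<exists>k::int. u = (t + pi) + 2*pi * of_int k"
  proof (rule ccontr)
    assume nt: "\<not> ?thesis"
    obtain u' where "\<Gamma> u w \<bullet> cis (t + pi) < \<Gamma> u' w \<bullet> cis (t + pi)"
      using G.local_improve[OF nt, of 1] by auto
    then show False using gm[of u'] by simp
  qed
  then obtain k :: int where "u = (t + pi) + 2*pi * of_int k" by blast
  then have "\<Gamma> u w = \<Gamma> (t + pi) w" using G.gint by simp
  then show ?thesis using u by simp
qed

end

locale main_data = tube_data +
  fixes \<tau> :: complex and z e0 :: real and \<zeta> :: "real \<Rightarrow> real \<Rightarrow> real" and \<theta>e :: "real \<Rightarrow> real \<Rightarrow> real"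
    and Dz :: "real \<times> real \<Rightarrow> ((real \<times> real) \<Rightarrow>\<^sub>L real)"
  assumes z: "z \<in> {-1<..<1}" and e0: "e0 > 0"
    and zD: "\<And>y. y \<in> {-e0<..<e0} \<times> UNIV \<Longrightarrow> ((\<lambda>(\<epsilon>, t). \<zeta> \<epsilon> t) has_derivative blinfun_apply (Dz y)) (at y)"
    and zeta0: "\<forall>t. \<zeta> 0 t = z"
    and zeta_range: "\<forall>\<epsilon>\<in>{-e0<..<e0}. \<forall>t. \<zeta> \<epsilon> t \<in> {-1<..<1}"
    and zeta_eq: "\<forall>\<epsilon>\<in>{-e0<..<e0}. \<forall>t. \<zeta> \<epsilon> t = z + \<epsilon> * (\<tau> \<bullet> \<Gamma> t (\<zeta> \<epsilon> t))"
    and th0: "\<forall>t. \<theta>e 0 t = t"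
    and th_diffeo: "\<forall>\<epsilon>\<in>{-e0<..<e0}. \<forall>t. \<exists>d>0. (\<theta>e \<epsilon> has_real_derivative d) (at t)"
    and th_diff_eps: "\<forall>\<epsilon>\<in>{-e0<..<e0}. \<forall>t. (\<lambda>e. \<theta>e e t) differentiable (at \<epsilon>)"
    and th_support: "\<forall>\<epsilon>\<in>{-e0<..<e0}.
        support_param (\<lambda>t. \<Gamma> (\<theta>e \<epsilon> t) (\<zeta> \<epsilon> (\<theta>e \<epsilon> t))) (tsec (tube c0 \<gamma>) \<tau> z \<epsilon>)"
begin

lemma zeta_d1:
  assumes "\<epsilon> \<in> {-e0<..<e0}"
  shows "(\<zeta> \<epsilon> has_real_derivative blinfun_apply (Dz (\<epsilon>, s)) (0, 1)) (at s)"
proof -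
  have "((\<lambda>s. (\<lambda>(\<epsilon>, t). \<zeta> \<epsilon> t) (\<epsilon>, s)) has_derivative (\<lambda>h. blinfun_apply (Dz (\<epsilon>, s)) (0, h))) (at s)"
    by (rule has_derivative_compose[of "\<lambda>s. (\<epsilon>, s)" "\<lambda>h. (0, h)"])
       (auto intro!: derivative_eq_intros zD assms)
  moreover have "(\<lambda>h. blinfun_apply (Dz (\<epsilon>, s)) (0, h)) = (*) (blinfun_apply (Dz (\<epsilon>, s)) (0, 1))"
    by (rule ext) (subst pair_lin[OF blinfun.bounded_linear_right], simp)
  ultimately show ?thesis unfolding has_field_derivative_def by simp
qed

lemma Pd:
  obtains G\<theta> Gz where "((\<lambda>s. \<Gamma> s z) has_vector_derivative G\<theta>) (at t)"
    "((\<lambda>w. \<Gamma> t w) has_vector_derivative Gz) (at z)"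
    "((\<lambda>\<epsilon>. \<Gamma> (\<theta>e \<epsilon> t) (\<zeta> \<epsilon> (\<theta>e \<epsilon> t))) has_vector_derivative
        (((Gz \<bullet> cis t) * (\<tau> \<bullet> (\<i> * cis t))) *\<^sub>R G\<theta> + (\<tau> \<bullet> \<Gamma> t z) *\<^sub>R Gz)) (at 0)"
proof -
  obtain N DG where N: "open N" "(t, z) \<in> N" "N \<subseteq> UNIV \<times> {-1<..<1}"
      and DG: "\<And>x. x \<in> N \<Longrightarrow> ((\<lambda>x. \<Gamma> (fst x) (snd x)) has_derivative DG x) (at x)"
      and DGc: "\<And>h. isCont (\<lambda>x. DG x h) (t, z)"
    using Gamma_C1[OF z] by blast
  define Gm where "Gm x = \<Gamma> (fst x) (snd x)" for x :: "real \<times> real"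
  have Gmd: "(Gm has_derivative DG x) (at x)" if "x \<in> N" for x
    unfolding Gm_def[abs_def] using DG[OF that] .
  have DGl: "bounded_linear (DG x)" if "x \<in> N" for x using Gmd[OF that] has_derivative_bounded_linear by blast
  have part1: "((\<lambda>s. \<Gamma> s w) has_vector_derivative DG (s, w) (1, 0)) (at s)" if "(s, w) \<in> N" for s w
    using pair_deriv_parts(1)[OF Gmd[OF that]] unfolding Gm_def by simp
  have part2: "((\<lambda>w. \<Gamma> s w) has_vector_derivative DG (s, w) (0, 1)) (at w)" if "(s, w) \<in> N" for s w
    using pair_deriv_parts(2)[OF Gmd[OF that]] unfolding Gm_def by simp
  have suppform: "DG (s, w) (1, 0) = complex_of_real (cmod (DG (s, w) (1, 0))) * \<i> * exp (\<i> * complex_of_real s)"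
    if "(s, w) \<in> N" for s w
  proof -
    have w: "w \<in> {-1<..<1}" using that N(3) by auto
    obtain d where d: "((\<lambda>t. \<Gamma> t w) has_vector_derivative d) (at s)"
       "d = complex_of_real (cmod d) * \<i> * exp (\<i> * complex_of_real s)"
      using supp[OF w] unfolding support_param_def by blast
    have "d = DG (s, w) (1, 0)" using vector_derivative_unique_at[OF d(1) part1[OF that]] .
    then show ?thesis using d(2) by simp
  qed
  define G\<theta> where "G\<theta> = DG (t, z) (1, 0)"
  define Gz where "Gz = DG (t, z) (0, 1)"
  define u where "u \<epsilon> = \<theta>e \<epsilon> t" for \<epsilon>
  have e00: "(0::real) \<in> {-e0<..<e0}" using e0 by simp
  obtain ut where ut: "(u has_real_derivative ut) (at 0)"
    using th_diff_eps e00 unfolding u_def by (metis DERIV_deriv_iff_real_differentiable)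
  have u0: "u 0 = t" using th0 unfolding u_def by simp
  define Z where "Z \<epsilon> = \<zeta> \<epsilon> (u \<epsilon>)" for \<epsilon>
  have Z0: "Z 0 = z" using zeta0 unfolding Z_def by simp
  define Zd where "Zd = blinfun_apply (Dz (0, t)) (1, ut)"
  have Zder: "(Z has_real_derivative Zd) (at 0)"
  proof -
    have p: "((\<lambda>\<epsilon>. (\<epsilon>, u \<epsilon>)) has_derivative (\<lambda>h. (h, ut * h))) (at 0)"
      using has_derivative_Pair[OF has_derivative_ident ut[unfolded has_field_derivative_def]] by simp
    have "((\<lambda>(\<epsilon>, t). \<zeta> \<epsilon> t) has_derivative blinfun_apply (Dz (0, t))) (at (0, u 0))"
      using zD[of "(0, t)"] e00 u0 by simp
    from has_derivative_compose[OF p this]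
    have "((\<lambda>\<epsilon>. (\<lambda>(\<epsilon>, t). \<zeta> \<epsilon> t) (\<epsilon>, u \<epsilon>)) has_derivative (\<lambda>h. blinfun_apply (Dz (0, t)) (h, ut * h))) (at 0)" .
    moreover have "(\<lambda>h. blinfun_apply (Dz (0, t)) (h, ut * h)) = (*) Zd"
    proof
      fix h
      have "blinfun_apply (Dz (0, t)) (h, ut * h) = blinfun_apply (Dz (0, t)) (h *\<^sub>R (1, ut))"
        by (simp add: mult.commute)
      also have "\<dots> = h *\<^sub>R blinfun_apply (Dz (0, t)) (1, ut)" by (rule blinfun.scaleR_right)
      finally show "blinfun_apply (Dz (0, t)) (h, ut * h) = Zd * h" unfolding Zd_def by simp
    qed
    ultimately show ?thesis unfolding has_field_derivative_def Z_def by simp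
  qed
  define P where "P \<epsilon> = Gm (u \<epsilon>, Z \<epsilon>)" for \<epsilon>
  have Peq: "P = (\<lambda>\<epsilon>. \<Gamma> (\<theta>e \<epsilon> t) (\<zeta> \<epsilon> (\<theta>e \<epsilon> t)))" unfolding P_def Gm_def Z_def u_def by auto
  have Pder: "(P has_vector_derivative (ut *\<^sub>R G\<theta> + Zd *\<^sub>R Gz)) (at 0)"
  proof -
    have tzN: "(u 0, Z 0) \<in> N" using u0 Z0 N(2) by simp
    have p: "((\<lambda>\<epsilon>. (u \<epsilon>, Z \<epsilon>)) has_derivative (\<lambda>h. (ut * h, Zd * h))) (at 0)"
      using has_derivative_Pair[OF ut[unfolded has_field_derivative_def] Zder[unfolded has_field_derivative_def]] by simp
    have "(Gm has_derivative DG (t, z)) (at (u 0, Z 0))" using Gmd[OF N(2)] u0 Z0 by simp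
    from has_derivative_compose[OF p this]
    have "((\<lambda>\<epsilon>. Gm (u \<epsilon>, Z \<epsilon>)) has_derivative (\<lambda>h. DG (t, z) (ut * h, Zd * h))) (at 0)" .
    moreover have "(\<lambda>h. DG (t, z) (ut * h, Zd * h)) = (\<lambda>h. h *\<^sub>R (ut *\<^sub>R G\<theta> + Zd *\<^sub>R Gz))"
      by (rule ext) (subst pair_lin[OF DGl[OF N(2)]], simp add: G\<theta>_def Gz_def scaleR_add_right mult.commute)
    ultimately show ?thesis unfolding has_vector_derivative_def P_def by simp
  qed
  have Zd_val: "Zd = \<tau> \<bullet> \<Gamma> t z"
  proof -
    have "((\<lambda>\<epsilon>. \<tau> \<bullet> P \<epsilon>) has_real_derivative \<tau> \<bullet> (ut *\<^sub>R G\<theta> + Zd *\<^sub>R Gz)) (at 0)"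
      using Pder unfolding has_vector_derivative_def has_field_derivative_def
      by (auto intro!: derivative_eq_intros simp: inner_commute[of \<tau>] mult.commute)
    then have "((\<lambda>\<epsilon>. \<epsilon> * (\<tau> \<bullet> P \<epsilon>)) has_real_derivative \<tau> \<bullet> P 0) (at 0)"
      using DERIV_mult[OF DERIV_ident] by fastforce
    then have "((\<lambda>\<epsilon>. z + \<epsilon> * (\<tau> \<bullet> P \<epsilon>)) has_real_derivative \<tau> \<bullet> P 0) (at 0)"
      using DERIV_add[OF DERIV_const] by fastforce
    then have K: "((\<lambda>\<epsilon>. z + \<epsilon> * (\<tau> \<bullet> P \<epsilon>)) has_real_derivative \<tau> \<bullet> \<Gamma> t z) (at 0)"
      unfolding P_def Gm_def using u0 Z0 by simp
    have "(Z has_real_derivative \<tau> \<bullet> \<Gamma> t z) (at 0)"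
    proof (rule has_field_derivative_transform_within_open[OF K, of "{-e0<..<e0}"])
      fix \<epsilon> :: real assume "\<epsilon> \<in> {-e0<..<e0}"
      then show "z + \<epsilon> * (\<tau> \<bullet> P \<epsilon>) = Z \<epsilon>"
        using zeta_eq unfolding P_def Gm_def Z_def by simp
    qed (use e0 in auto)
    then show ?thesis using Zder DERIV_unique by blast
  qed
  define g where "g \<epsilon> = (u \<epsilon>, Z \<epsilon>)" for \<epsilon>
  have g0: "g 0 = (t, z)" unfolding g_def using u0 Z0 by simp
  have gc: "isCont g 0" unfolding g_def
    using DERIV_isCont[OF ut] DERIV_isCont[OF Zder] by (intro continuous_intros)
  have gt: "(g \<longlongrightarrow> (t, z)) (at 0)" using gc g0 unfolding isCont_def by simp
  have evN: "eventually (\<lambda>\<epsilon>. g \<epsilon> \<in> N) (at 0)" using topological_tendstoD[OF gt N(1,2)] .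
  have evE: "eventually (\<lambda>\<epsilon>. \<epsilon> \<in> {-e0<..<e0}) (at (0::real))"
    using topological_tendstoD[OF tendsto_ident_at open_greaterThanLessThan e00] .
  have evne: "eventually (\<lambda>\<epsilon>. \<epsilon> \<noteq> 0) (at (0::real))" using eventually_neq_at_within by blast
  define \<rho> where "\<rho> x = cmod (DG x (1, 0))" for x
  define H where "H \<epsilon> = \<rho> (g \<epsilon>) * (sin (t - u \<epsilon>) / \<epsilon>) * (1 - \<epsilon> * (\<tau> \<bullet> DG (g \<epsilon>) (0, 1)))
      + (\<tau> \<bullet> DG (g \<epsilon>) (1, 0)) * (DG (g \<epsilon>) (0, 1) \<bullet> cis t)" for \<epsilon>
  have Hzero: "H \<epsilon> = 0" if eN: "g \<epsilon> \<in> N" and eE: "\<epsilon> \<in> {-e0<..<e0}" and ene: "\<epsilon> \<noteq> 0" for \<epsilon>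
  proof -
    define x where "x = g \<epsilon>"
    have xeq: "x = (u \<epsilon>, \<zeta> \<epsilon> (u \<epsilon>))" unfolding x_def g_def Z_def by simp
    have xN: "x \<in> N" using eN x_def by simp
    define DG\<theta> where "DG\<theta> = DG x (1, 0)"
    define DGz where "DGz = DG x (0, 1)"
    define \<zeta>s where "\<zeta>s = blinfun_apply (Dz (\<epsilon>, u \<epsilon>)) (0, 1)"
    have Dzlin: "blinfun_apply (Dz (\<epsilon>, u \<epsilon>)) (0, a) = a * \<zeta>s" for a
      unfolding \<zeta>s_def by (subst pair_lin[OF blinfun.bounded_linear_right]) simp
    have R1: "\<zeta>s = \<epsilon> * (\<tau> \<bullet> DG\<theta> + \<zeta>s * (\<tau> \<bullet> DGz))"
    proof -
      have A: "(\<zeta> \<epsilon> has_real_derivative \<zeta>s) (at (u \<epsilon>))" unfolding \<zeta>s_def by (rule zeta_d1[OF eE])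
      have p: "((\<lambda>s. (s, \<zeta> \<epsilon> s)) has_derivative (\<lambda>h. (h, \<zeta>s * h))) (at (u \<epsilon>))"
        using has_derivative_Pair[OF has_derivative_ident A[unfolded has_field_derivative_def]] by simp
      have "(Gm has_derivative DG x) (at (u \<epsilon>, \<zeta> \<epsilon> (u \<epsilon>)))" using Gmd[OF xN] xeq by simp
      from has_derivative_compose[OF p this]
      have "((\<lambda>s. Gm (s, \<zeta> \<epsilon> s)) has_derivative (\<lambda>h. DG x (h, \<zeta>s * h))) (at (u \<epsilon>))" .
      moreover have "(\<lambda>h. DG x (h, \<zeta>s * h)) = (\<lambda>h. h *\<^sub>R (DG\<theta> + \<zeta>s *\<^sub>R DGz))"
        by (rule ext) (subst pair_lin[OF DGl[OF xN]], simp add: DG\<theta>_def DGz_def scaleR_add_right mult.commute)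
      ultimately have "((\<lambda>s. Gm (s, \<zeta> \<epsilon> s)) has_derivative (\<lambda>h. h *\<^sub>R (DG\<theta> + \<zeta>s *\<^sub>R DGz))) (at (u \<epsilon>))" by simp
      then have "((\<lambda>s. \<tau> \<bullet> Gm (s, \<zeta> \<epsilon> s)) has_derivative (\<lambda>h. \<tau> \<bullet> (h *\<^sub>R (DG\<theta> + \<zeta>s *\<^sub>R DGz)))) (at (u \<epsilon>))"
        by (auto intro!: derivative_eq_intros)
      moreover have "(\<lambda>h. \<tau> \<bullet> (h *\<^sub>R (DG\<theta> + \<zeta>s *\<^sub>R DGz))) = (*) (\<tau> \<bullet> DG\<theta> + \<zeta>s * (\<tau> \<bullet> DGz))"
        by (rule ext) (simp add: inner_add_right algebra_simps)
      ultimately have B0: "((\<lambda>s. \<tau> \<bullet> Gm (s, \<zeta> \<epsilon> s)) has_real_derivative (\<tau> \<bullet> DG\<theta> + \<zeta>s * (\<tau> \<bullet> DGz))) (at (u \<epsilon>))"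
        unfolding has_field_derivative_def by simp
      have B: "((\<lambda>s. z + \<epsilon> * (\<tau> \<bullet> Gm (s, \<zeta> \<epsilon> s))) has_real_derivative \<epsilon> * (\<tau> \<bullet> DG\<theta> + \<zeta>s * (\<tau> \<bullet> DGz))) (at (u \<epsilon>))"
        using DERIV_add[OF DERIV_const DERIV_cmult[OF B0, of \<epsilon>]] by simp
      have "(\<lambda>s. z + \<epsilon> * (\<tau> \<bullet> Gm (s, \<zeta> \<epsilon> s))) = \<zeta> \<epsilon>"
        using zeta_eq eE unfolding Gm_def by (auto simp: fun_eq_iff)
      then show ?thesis using A B DERIV_unique by metis
    qed
    have S: "(DG\<theta> + \<zeta>s *\<^sub>R DGz) \<bullet> cis t = 0"
    proof -
      obtain \<theta>' where th': "\<theta>' > 0" "(\<theta>e \<epsilon> has_real_derivative \<theta>') (at t)" using th_diffeo eE by blast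
      have p1: "((\<lambda>s. (\<epsilon>, \<theta>e \<epsilon> s)) has_derivative (\<lambda>h. (0, \<theta>' * h))) (at t)"
        using has_derivative_Pair[OF has_derivative_const[of \<epsilon>] th'(2)[unfolded has_field_derivative_def]] by simp
      have "((\<lambda>(\<epsilon>, t). \<zeta> \<epsilon> t) has_derivative blinfun_apply (Dz (\<epsilon>, u \<epsilon>))) (at (\<epsilon>, \<theta>e \<epsilon> t))"
        using zD[of "(\<epsilon>, u \<epsilon>)"] eE unfolding u_def by simp
      from has_derivative_compose[OF p1 this]
      have "((\<lambda>s. \<zeta> \<epsilon> (\<theta>e \<epsilon> s)) has_derivative (\<lambda>h. blinfun_apply (Dz (\<epsilon>, u \<epsilon>)) (0, \<theta>' * h))) (at t)"
        by simp
      then have p2: "((\<lambda>s. \<zeta> \<epsilon> (\<theta>e \<epsilon> s)) has_derivative (\<lambda>h. (\<theta>' * h) * \<zeta>s)) (at t)"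
        unfolding Dzlin .
      have p: "((\<lambda>s. (\<theta>e \<epsilon> s, \<zeta> \<epsilon> (\<theta>e \<epsilon> s))) has_derivative (\<lambda>h. (\<theta>' * h, (\<theta>' * h) * \<zeta>s))) (at t)"
        using has_derivative_Pair[OF th'(2)[unfolded has_field_derivative_def] p2] by (simp add: mult.commute)
      have "(Gm has_derivative DG x) (at (\<theta>e \<epsilon> t, \<zeta> \<epsilon> (\<theta>e \<epsilon> t)))" using Gmd[OF xN] xeq u_def by simp
      from has_derivative_compose[OF p this]
      have "((\<lambda>s. Gm (\<theta>e \<epsilon> s, \<zeta> \<epsilon> (\<theta>e \<epsilon> s))) has_derivative (\<lambda>h. DG x (\<theta>' * h, (\<theta>' * h) * \<zeta>s))) (at t)" .
      moreover have "(\<lambda>h. DG x (\<theta>' * h, (\<theta>' * h) * \<zeta>s)) = (\<lambda>h. h *\<^sub>R (\<theta>' *\<^sub>R (DG\<theta> + \<zeta>s *\<^sub>R DGz)))"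
        by (rule ext) (subst pair_lin[OF DGl[OF xN]], simp add: DG\<theta>_def DGz_def scaleR_add_right algebra_simps)
      ultimately have Qd: "((\<lambda>s. \<Gamma> (\<theta>e \<epsilon> s) (\<zeta> \<epsilon> (\<theta>e \<epsilon> s))) has_vector_derivative \<theta>' *\<^sub>R (DG\<theta> + \<zeta>s *\<^sub>R DGz)) (at t)"
        unfolding has_vector_derivative_def Gm_def by simp
      obtain d where d: "((\<lambda>s. \<Gamma> (\<theta>e \<epsilon> s) (\<zeta> \<epsilon> (\<theta>e \<epsilon> s))) has_vector_derivative d) (at t)"
        "d = complex_of_real (cmod d) * \<i> * exp (\<i> * complex_of_real t)"
        using th_support eE unfolding support_param_def by blast
      have dd: "d = \<theta>' *\<^sub>R (DG\<theta> + \<zeta>s *\<^sub>R DGz)" using vector_derivative_unique_at[OF d(1) Qd] .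
      have "d \<bullet> cis t = 0" by (subst d(2)) (simp add: inner_support_dir)
      then have "\<theta>' * ((DG\<theta> + \<zeta>s *\<^sub>R DGz) \<bullet> cis t) = 0" unfolding dd by simp
      then show ?thesis using th'(1) by simp
    qed
    have T: "DG\<theta> \<bullet> cis t = \<rho> x * sin (t - u \<epsilon>)"
    proof -
      have "DG\<theta> = complex_of_real (\<rho> x) * \<i> * exp (\<i> * complex_of_real (u \<epsilon>))"
        unfolding DG\<theta>_def \<rho>_def using suppform[of "u \<epsilon>" "\<zeta> \<epsilon> (u \<epsilon>)"] xN xeq by simp
      then show ?thesis by (simp add: inner_support_dir)
    qed
    have E: "\<rho> x * sin (t - u \<epsilon>) + \<zeta>s * (DGz \<bullet> cis t) = 0"
      using S T by (simp add: inner_add_left)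
    have E2: "\<rho> x * sin (t - u \<epsilon>) * (1 - \<epsilon> * (\<tau> \<bullet> DGz)) + \<epsilon> * (\<tau> \<bullet> DG\<theta>) * (DGz \<bullet> cis t) = 0"
    proof -
      have k: "\<zeta>s * (1 - \<epsilon> * (\<tau> \<bullet> DGz)) = \<epsilon> * (\<tau> \<bullet> DG\<theta>)" using R1 by (simp add: algebra_simps)
      have "(\<rho> x * sin (t - u \<epsilon>) + \<zeta>s * (DGz \<bullet> cis t)) * (1 - \<epsilon> * (\<tau> \<bullet> DGz))
          = \<rho> x * sin (t - u \<epsilon>) * (1 - \<epsilon> * (\<tau> \<bullet> DGz)) + (DGz \<bullet> cis t) * (\<zeta>s * (1 - \<epsilon> * (\<tau> \<bullet> DGz)))"
        by (simp add: algebra_simps)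
      also have "\<dots> = \<rho> x * sin (t - u \<epsilon>) * (1 - \<epsilon> * (\<tau> \<bullet> DGz)) + \<epsilon> * (\<tau> \<bullet> DG\<theta>) * (DGz \<bullet> cis t)"
        by (simp only: k mult.commute)
      finally show ?thesis using E by simp
    qed
    have "H \<epsilon> * \<epsilon> = \<rho> x * sin (t - u \<epsilon>) * (1 - \<epsilon> * (\<tau> \<bullet> DGz)) + \<epsilon> * (\<tau> \<bullet> DG\<theta>) * (DGz \<bullet> cis t)"
      unfolding H_def x_def[symmetric] DG\<theta>_def[symmetric] DGz_def[symmetric] using ene
      by (simp add: field_simps)
    then show ?thesis using E2 ene by simp
  qed
  have evH: "eventually (\<lambda>\<epsilon>. H \<epsilon> = 0) (at 0)"
    using evN evE evne by eventually_elim (use Hzero in blast)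
  have lsin: "((\<lambda>\<epsilon>. sin (t - u \<epsilon>) / \<epsilon>) \<longlongrightarrow> - ut) (at 0)"
  proof -
    have "((\<lambda>\<epsilon>. sin (t - u \<epsilon>)) has_real_derivative cos (t - u 0) * (0 - ut)) (at 0)"
      by (intro DERIV_fun_sin DERIV_diff DERIV_const ut)
    then have "((\<lambda>\<epsilon>. sin (t - u \<epsilon>)) has_real_derivative - ut) (at 0)" using u0 by simp
    then show ?thesis unfolding DERIV_def using u0 by simp
  qed
  have lDG: "((\<lambda>\<epsilon>. DG (g \<epsilon>) v) \<longlongrightarrow> DG (t, z) v) (at 0)" for v
    using isCont_tendsto_compose[OF DGc[of v] gt] .
  have "(H \<longlongrightarrow> \<rho> (t, z) * (- ut) * (1 - 0 * (\<tau> \<bullet> DG (t, z) (0, 1))) + (\<tau> \<bullet> DG (t, z) (1, 0)) * (DG (t, z) (0, 1) \<bullet> cis t)) (at 0)"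
    unfolding H_def \<rho>_def
    by (intro tendsto_intros lDG lsin tendsto_ident_at)
  moreover have "(H \<longlongrightarrow> 0) (at 0)" using tendsto_eventually[OF evH] .
  ultimately have lim: "\<rho> (t, z) * (- ut) + (\<tau> \<bullet> G\<theta>) * (Gz \<bullet> cis t) = 0"
    using tendsto_unique[OF at_neq_bot] unfolding G\<theta>_def Gz_def by fastforce
  have uteq: "ut *\<^sub>R G\<theta> = ((Gz \<bullet> cis t) * (\<tau> \<bullet> (\<i> * cis t))) *\<^sub>R G\<theta>"
  proof -
    have G\<theta>f: "G\<theta> = \<rho> (t, z) *\<^sub>R (\<i> * cis t)"
      using suppform[OF N(2)] unfolding G\<theta>_def \<rho>_def by (simp add: cis_conv_exp scaleR_conv_of_real mult.assoc)
    have tg: "\<tau> \<bullet> G\<theta> = \<rho> (t, z) * (\<tau> \<bullet> (\<i> * cis t))" by (subst G\<theta>f) simp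
    have l2: "\<rho> (t, z) * ut = (\<tau> \<bullet> G\<theta>) * (Gz \<bullet> cis t)" using lim by (simp add: algebra_simps)
    have l3: "(\<tau> \<bullet> G\<theta>) * (Gz \<bullet> cis t) = \<rho> (t, z) * ((Gz \<bullet> cis t) * (\<tau> \<bullet> (\<i> * cis t)))"
      unfolding tg by (simp only: mult.assoc mult.commute mult.left_commute)
    show ?thesis
    proof (cases "\<rho> (t, z) = 0")
      case True then show ?thesis unfolding G\<theta>f by simp
    next
      case False
      then have "ut = (Gz \<bullet> cis t) * (\<tau> \<bullet> (\<i> * cis t))" using l2 l3 by simp
      then show ?thesis by simp
    qed
  qed
  show ?thesis
  proof (rule that)
    show "((\<lambda>s. \<Gamma> s z) has_vector_derivative G\<theta>) (at t)" unfolding G\<theta>_def by (rule part1[OF N(2)])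
    show "((\<lambda>w. \<Gamma> t w) has_vector_derivative Gz) (at z)" unfolding Gz_def by (rule part2[OF N(2)])
    show "((\<lambda>\<epsilon>. \<Gamma> (\<theta>e \<epsilon> t) (\<zeta> \<epsilon> (\<theta>e \<epsilon> t))) has_vector_derivative
        (((Gz \<bullet> cis t) * (\<tau> \<bullet> (\<i> * cis t))) *\<^sub>R G\<theta> + (\<tau> \<bullet> \<Gamma> t z) *\<^sub>R Gz)) (at 0)"
      using Pder unfolding Peq Zd_val uteq .
  qed
qed

end

context main_data begin

lemma final:
  assumes central: "\<forall>w\<in>{-1<..<1}. central_about (hsec (tube c0 \<gamma>) w) (c w)"
  shows "((\<lambda>\<epsilon>. tilt_centrix \<Gamma> \<zeta> \<theta>e \<epsilon> \<theta>) has_vector_derivative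
           ((\<tau> \<bullet> (\<i> * exp (\<i> * complex_of_real \<theta>)))
              * (vector_derivative (\<lambda>w. Gamma_star \<Gamma> \<theta> w) (at z) \<bullet> exp (\<i> * complex_of_real \<theta>)))
             *\<^sub>R vector_derivative (\<lambda>t. Gamma_star \<Gamma> t z) (at \<theta>)
           + (\<tau> \<bullet> c z) *\<^sub>R vector_derivative c (at z)
           + (\<tau> \<bullet> Gamma_star \<Gamma> \<theta> z) *\<^sub>R vector_derivative (\<lambda>w. Gamma_star \<Gamma> \<theta> w) (at z))
         (at 0)"
proof -
  obtain G\<theta>0 Gz0 where A: "((\<lambda>s. \<Gamma> s z) has_vector_derivative G\<theta>0) (at \<theta>)"
      "((\<lambda>w. \<Gamma> \<theta> w) has_vector_derivative Gz0) (at z)"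
      "((\<lambda>\<epsilon>. \<Gamma> (\<theta>e \<epsilon> \<theta>) (\<zeta> \<epsilon> (\<theta>e \<epsilon> \<theta>))) has_vector_derivative
        (((Gz0 \<bullet> cis \<theta>) * (\<tau> \<bullet> (\<i> * cis \<theta>))) *\<^sub>R G\<theta>0 + (\<tau> \<bullet> \<Gamma> \<theta> z) *\<^sub>R Gz0)) (at 0)"
    using Pd by blast
  obtain G\<theta>1 Gz1 where B: "((\<lambda>s. \<Gamma> s z) has_vector_derivative G\<theta>1) (at (\<theta> + pi))"
      "((\<lambda>w. \<Gamma> (\<theta> + pi) w) has_vector_derivative Gz1) (at z)"
      "((\<lambda>\<epsilon>. \<Gamma> (\<theta>e \<epsilon> (\<theta> + pi)) (\<zeta> \<epsilon> (\<theta>e \<epsilon> (\<theta> + pi)))) has_vector_derivative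
        (((Gz1 \<bullet> cis (\<theta> + pi)) * (\<tau> \<bullet> (\<i> * cis (\<theta> + pi)))) *\<^sub>R G\<theta>1 + (\<tau> \<bullet> \<Gamma> (\<theta> + pi) z) *\<^sub>R Gz1)) (at 0)"
    using Pd by blast
  have anti: "\<Gamma> (s + pi) w = 2 * c w - \<Gamma> s w" if "w \<in> {-1<..<1}" for s w
    using antipodal[OF that] central that by blast
  have "((\<lambda>s. \<Gamma> (s + pi) z) has_vector_derivative G\<theta>1) (at \<theta>)"
  proof -
    have "((\<lambda>s. s + pi) has_vector_derivative 1) (at \<theta>)" by (auto intro!: derivative_eq_intros)
    from vector_diff_chain_at[OF this] B(1) show ?thesis by (simp add: o_def)
  qed
  moreover have "((\<lambda>s. \<Gamma> (s + pi) z) has_vector_derivative - G\<theta>0) (at \<theta>)"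
  proof -
    have "((\<lambda>s. 2 * c z - \<Gamma> s z) has_vector_derivative 0 - G\<theta>0) (at \<theta>)"
      by (intro has_vector_derivative_diff has_vector_derivative_const A(1))
    then show ?thesis using anti[OF z] by simp
  qed
  ultimately have G\<theta>1: "G\<theta>1 = - G\<theta>0" using vector_derivative_unique_at by blast
  have vc: "vector_derivative c (at z) = (Gz0 + Gz1) / 2"
  proof -
    have "((\<lambda>w. (\<Gamma> \<theta> w + \<Gamma> (\<theta> + pi) w) / 2) has_vector_derivative (Gz0 + Gz1) / 2) (at z)"
      using has_vector_derivative_add[OF A(2) B(2)] by (simp add: has_vector_derivative_divide) 
    then have "(c has_vector_derivative (Gz0 + Gz1) / 2) (at z)"
      by (rule has_vector_derivative_transform_within_open[of _ _ _ "{-1<..<1}"]) (use z anti in auto)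
    then show ?thesis by (rule vector_derivative_at)
  qed
  have vz: "vector_derivative (\<lambda>w. Gamma_star \<Gamma> \<theta> w) (at z) = (Gz0 - Gz1) / 2"
  proof -
    have "((\<lambda>w. Gamma_star \<Gamma> \<theta> w) has_vector_derivative (Gz0 - Gz1) / 2) (at z)"
      unfolding Gamma_star_def
      using has_vector_derivative_diff[OF A(2) B(2)] by (simp add: has_vector_derivative_divide)
    then show ?thesis by (rule vector_derivative_at)
  qed
  have vt: "vector_derivative (\<lambda>t. Gamma_star \<Gamma> t z) (at \<theta>) = G\<theta>0"
  proof -
    have "((\<lambda>t. (\<Gamma> t z - (2 * c z - \<Gamma> t z)) / 2) has_vector_derivative (G\<theta>0 - (0 - G\<theta>0)) / 2) (at \<theta>)"
      by (intro has_vector_derivative_divide has_vector_derivative_diff has_vector_derivative_const A(1))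
    moreover have "(\<lambda>t. (\<Gamma> t z - (2 * c z - \<Gamma> t z)) / 2) = (\<lambda>t. Gamma_star \<Gamma> t z)"
      unfolding Gamma_star_def using anti[OF z] by auto
    ultimately show ?thesis using vector_derivative_at by fastforce
  qed
  have tc: "(\<lambda>\<epsilon>. tilt_centrix \<Gamma> \<zeta> \<theta>e \<epsilon> \<theta>) = (\<lambda>\<epsilon>. (\<Gamma> (\<theta>e \<epsilon> \<theta>) (\<zeta> \<epsilon> (\<theta>e \<epsilon> \<theta>)) + \<Gamma> (\<theta>e \<epsilon> (\<theta> + pi)) (\<zeta> \<epsilon> (\<theta>e \<epsilon> (\<theta> + pi)))) / 2)"
    unfolding tilt_centrix_def by simp
  have D: "((\<lambda>\<epsilon>. tilt_centrix \<Gamma> \<zeta> \<theta>e \<epsilon> \<theta>) has_vector_derivative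
     ((((Gz0 \<bullet> cis \<theta>) * (\<tau> \<bullet> (\<i> * cis \<theta>))) *\<^sub>R G\<theta>0 + (\<tau> \<bullet> \<Gamma> \<theta> z) *\<^sub>R Gz0) +
      (((Gz1 \<bullet> cis (\<theta> + pi)) * (\<tau> \<bullet> (\<i> * cis (\<theta> + pi)))) *\<^sub>R G\<theta>1 + (\<tau> \<bullet> \<Gamma> (\<theta> + pi) z) *\<^sub>R Gz1)) / 2) (at 0)"
    unfolding tc by (intro has_vector_derivative_divide has_vector_derivative_add A(3) B(3))
  have g1: "\<Gamma> (\<theta> + pi) z = 2 * c z - \<Gamma> \<theta> z" using anti[OF z] .
  have gs: "Gamma_star \<Gamma> \<theta> z = \<Gamma> \<theta> z - c z" unfolding Gamma_star_def g1 by simp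
  have cpi: "cis (\<theta> + pi) = - cis \<theta>" by (simp add: cis_def complex_eq_iff)
  define cp where "cp = (Gz0 + Gz1) / 2"
  define Sz where "Sz = (Gz0 - Gz1) / 2"
  define Gs where "Gs = \<Gamma> \<theta> z - c z"
  have z0: "Gz0 = cp + Sz" and z1: "Gz1 = cp - Sz" unfolding cp_def Sz_def by (simp_all add: field_simps)
  have g0: "\<Gamma> \<theta> z = c z + Gs" unfolding Gs_def by simp
  have g1': "\<Gamma> (\<theta> + pi) z = c z - Gs" unfolding Gs_def g1 by simp
  have target: "((((Gz0 \<bullet> cis \<theta>) * (\<tau> \<bullet> (\<i> * cis \<theta>))) *\<^sub>R G\<theta>0 + (\<tau> \<bullet> \<Gamma> \<theta> z) *\<^sub>R Gz0) +
      (((Gz1 \<bullet> cis (\<theta> + pi)) * (\<tau> \<bullet> (\<i> * cis (\<theta> + pi)))) *\<^sub>R G\<theta>1 + (\<tau> \<bullet> \<Gamma> (\<theta> + pi) z) *\<^sub>R Gz1)) / 2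
     = ((\<tau> \<bullet> (\<i> * cis \<theta>)) * (Sz \<bullet> cis \<theta>)) *\<^sub>R G\<theta>0 + (\<tau> \<bullet> c z) *\<^sub>R cp + (\<tau> \<bullet> Gs) *\<^sub>R Sz"
    unfolding g1' G\<theta>1 cpi g0 z0 z1
    by (simp add: inner_add_left inner_diff_left inner_add_right inner_diff_right scaleR_conv_of_real field_simps)
  show ?thesis
    using D unfolding target vc vz vt cis_conv_exp[symmetric] gs Gs_def[symmetric] cp_def[symmetric] Sz_def[symmetric] .
qed

end

theorem lemma3p7:
  fixes c0 :: "real \<Rightarrow> complex" and \<gamma> :: "real \<Rightarrow> real \<Rightarrow> complex"
    and \<Gamma> :: "real \<Rightarrow> real \<Rightarrow> complex" and c :: "real \<Rightarrow> complex"
    and \<tau> :: complex and z :: real and e0 :: real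
    and \<zeta> :: "real \<Rightarrow> real \<Rightarrow> real" and \<theta>e :: "real \<Rightarrow> real \<Rightarrow> real" and \<theta> :: real
  assumes tube: "tc_tube_std c0 \<gamma>"
    and support: "\<forall>w\<in>{-1<..<1}. support_param (\<lambda>t. \<Gamma> t w) (hsec (tube c0 \<gamma>) w)"
    and central: "\<forall>w\<in>{-1<..<1}. central_about (hsec (tube c0 \<gamma>) w) (c w)"
    and tau: "cmod \<tau> = 1"
    and z: "z \<in> {-1<..<1}"
    and e0: "e0 > 0"
    and zeta_C2: "C2_on ({-e0<..<e0} \<times> UNIV) (\<lambda>(\<epsilon>, t). \<zeta> \<epsilon> t)"
    and zeta0: "\<forall>t. \<zeta> 0 t = z"
    and zeta_range: "\<forall>\<epsilon>\<in>{-e0<..<e0}. \<forall>t. \<zeta> \<epsilon> t \<in> {-1<..<1}"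
    and zeta_eq: "\<forall>\<epsilon>\<in>{-e0<..<e0}. \<forall>t. \<zeta> \<epsilon> t = z + \<epsilon> * (\<tau> \<bullet> \<Gamma> t (\<zeta> \<epsilon> t))"
    and th0: "\<forall>t. \<theta>e 0 t = t"
    and th_lift: "\<forall>\<epsilon>\<in>{-e0<..<e0}. \<forall>t. \<theta>e \<epsilon> (t + 2*pi) = \<theta>e \<epsilon> t + 2*pi"
    and th_diffeo: "\<forall>\<epsilon>\<in>{-e0<..<e0}. \<forall>t. \<exists>d>0. (\<theta>e \<epsilon> has_real_derivative d) (at t)"
    and th_C1: "\<forall>\<epsilon>\<in>{-e0<..<e0}. continuous_on UNIV (deriv (\<theta>e \<epsilon>))"
    and th_diff_eps: "\<forall>\<epsilon>\<in>{-e0<..<e0}. \<forall>t. (\<lambda>e. \<theta>e e t) differentiable (at \<epsilon>)"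
    and th_support: "\<forall>\<epsilon>\<in>{-e0<..<e0}.
        support_param (\<lambda>t. \<Gamma> (\<theta>e \<epsilon> t) (\<zeta> \<epsilon> (\<theta>e \<epsilon> t))) (tsec (tube c0 \<gamma>) \<tau> z \<epsilon>)"
  shows "((\<lambda>\<epsilon>. tilt_centrix \<Gamma> \<zeta> \<theta>e \<epsilon> \<theta>) has_vector_derivative
           ((\<tau> \<bullet> (\<i> * exp (\<i> * complex_of_real \<theta>)))
              * (vector_derivative (\<lambda>w. Gamma_star \<Gamma> \<theta> w) (at z) \<bullet> exp (\<i> * complex_of_real \<theta>)))
             *\<^sub>R vector_derivative (\<lambda>t. Gamma_star \<Gamma> t z) (at \<theta>)
           + (\<tau> \<bullet> c z) *\<^sub>R vector_derivative c (at z)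
           + (\<tau> \<bullet> Gamma_star \<Gamma> \<theta> z) *\<^sub>R vector_derivative (\<lambda>w. Gamma_star \<Gamma> \<theta> w) (at z))
         (at 0)"
proof -
  have T: "C2_on {-1<..<1} c0" "C2_on (UNIV \<times> {-1<..<1}) (\<lambda>(\<theta>, z). \<gamma> z \<theta>)"
      "\<And>w. w \<in> {-1<..<1} \<Longrightarrow> oval_param (\<gamma> w)"
    using tube unfolding tc_tube_std_def by auto
  obtain Dc :: "real \<Rightarrow> (real \<Rightarrow>\<^sub>L complex)" and Dc2 where
      Dc: "\<forall>x\<in>{-1<..<1}. (c0 has_derivative blinfun_apply (Dc x)) (at x) \<and> (Dc has_derivative blinfun_apply (Dc2 x)) (at x)"
    using T(1) unfolding C2_on_def by blast
  obtain D :: "real \<times> real \<Rightarrow> ((real \<times> real) \<Rightarrow>\<^sub>L complex)" and D2 where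
      D: "\<forall>x\<in>UNIV \<times> {-1<..<1}. ((\<lambda>(\<theta>, z). \<gamma> z \<theta>) has_derivative blinfun_apply (D x)) (at x) \<and> (D has_derivative blinfun_apply (D2 x)) (at x)"
      "continuous_on (UNIV \<times> {-1<..<1}) D2"
    using T(2) unfolding C2_on_def by blast
  obtain Dz :: "real \<times> real \<Rightarrow> ((real \<times> real) \<Rightarrow>\<^sub>L real)" and Dz2 where
      Dz: "\<forall>x\<in>{-e0<..<e0} \<times> UNIV. ((\<lambda>(\<epsilon>, t). \<zeta> \<epsilon> t) has_derivative blinfun_apply (Dz x)) (at x) \<and> (Dz has_derivative blinfun_apply (Dz2 x)) (at x)"
    using zeta_C2 unfolding C2_on_def by blast
  interpret main_data c0 \<gamma> \<Gamma> D D2 Dc Dc2 \<tau> z e0 \<zeta> \<theta>e Dz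
  proof (unfold_locales)
    show "\<And>w. w \<in> {-1<..<1} \<Longrightarrow> (c0 has_derivative blinfun_apply (Dc w)) (at w)" using Dc by blast
    show "\<And>w. w \<in> {-1<..<1} \<Longrightarrow> (Dc has_derivative blinfun_apply (Dc2 w)) (at w)" using Dc by blast
    show "\<And>x. x \<in> UNIV \<times> {-1<..<1} \<Longrightarrow> ((\<lambda>(\<theta>, z). \<gamma> z \<theta>) has_derivative blinfun_apply (D x)) (at x)"
      using D by blast
    show "\<And>x. x \<in> UNIV \<times> {-1<..<1} \<Longrightarrow> (D has_derivative blinfun_apply (D2 x)) (at x)" using D by blast
    show "continuous_on (UNIV \<times> {-1<..<1}) D2" using D by blast
    show "\<And>w. w \<in> {-1<..<1} \<Longrightarrow> oval_param (\<gamma> w)" using T by blast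
    show "\<And>w. w \<in> {-1<..<1} \<Longrightarrow> support_param (\<lambda>t. \<Gamma> t w) (hsec (tube c0 \<gamma>) w)" using support by blast
    show "\<And>y. y \<in> {-e0<..<e0} \<times> UNIV \<Longrightarrow> ((\<lambda>(\<epsilon>, t). \<zeta> \<epsilon> t) has_derivative blinfun_apply (Dz y)) (at y)"
      using Dz by blast
  qed (use z e0 zeta0 zeta_range zeta_eq th0 th_diffeo th_diff_eps th_support in auto)
  show ?thesis using final[OF central] .
qed

end
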